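(* Let $\{\mathcal M_\omega\}_{\omega\in\Omega}$ be a family of $\mathcal L$-structures, $\mathbf M=\prod_{\omega\in\Omega}M_\omega$, and let $E$ be an integration functional on $\mathcal A=[0,1]^\Omega$. Let $(\widehat{\mathbf M},\widehat{\mathcal A})$ be the $\mathcal L^R$-structure associated to $(\mathbf M,\mathcal A)$ and $[\cdot]$ the canonical map. Then $(\mathbf M,\mathcal A)$ is full, and for every $\mathcal L$-formula $\varphi(\bar x)$ and every $\bar{\mathbf a}\in\mathbf M^n$: $\big[\langle\varphi(\bar{\mathbf a})\rangle\big]=[\![\varphi([\bar{\mathbf a}])]\!]$ (the right-hand side computed in $(\widehat{\mathbf M},\widehat{\mathcal A})$).
   Context: $\mathcal L$ is a (single-sorted) signature of continuous first-order logic. An integration functional on $\mathcal A=[0,1]^\Omega$ is $E\colon\mathcal A\to[0,1]$ with $E(1)=1$ and $E(X+Y)=E(X)+E(Y)$ whenever $X,Y,X+Y\in\mathcal A$. For $\bar{\mathbf a}\in\mathbf M^n$ and a formula $\varphi$, $\langle\varphi(\bar{\mathbf a})\rangle\in[0,1]^\Omega$ is $\omega\mapsto\varphi^{\mathcal M_\omega}(\bar{\mathbf a}(\omega))$. The randomisation signature $\mathcal L^R$ has a main sort carrying all function symbols of $\mathcal L$ (same continuity moduli), an auxiliary sort carrying $\{0,\neg,\tfrac12,\dotminus\}$, and for each predicate symbol $P$ of $\mathcal L$ a function symbol $[\![P]\!]$ from the main sort(s) to the auxiliary sort. $(\mathbf M,\mathcal A)$ is an $\mathcal L^R$-pre-structure: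 function symbols act pointwise on $\mathbf M$, $[\![P]\!](\bar{\mathbf a})=\langle P(\bar{\mathbf a})\rangle$, connectives act pointwise on $\mathcal A$ ($\neg X=1-X$, $\tfrac12X=X/2$, $X\dotminus Y=\max(X-Y,0)$), with pseudo-metrics $d(\mathbf a,\mathbf b)=E\langle d(\mathbf a,\mathbf b)\rangle$ and $d(X,Y)=E|X-Y|$. The associated structure $(\widehat{\mathbf M},\widehat{\mathcal A})$ is the completion of the quotient by distance zero; $[\cdot]$ is the canonical map, and $\widehat{\mathcal A}\cong L^1(\mathcal F,[0,1])$ for a probability space. $(\mathbf M,\mathcal A)$ is full if for all $\mathbf a,\mathbf b\in\mathbf M$, $X\in\mathcal A$ there is $\mathbf c\in\mathbf M$ with $\mathbf c(\omega)=\mathbf a(\omega)$ when $X(\omega)=1$ and $\mathbf c(\omega)=\mathbf b(\omega)$ when $X(\omega)=0$. In a structure with main sort $\mathbf N$ and auxiliary sort $L^1(\mathcal F,[0,1])$, $[\![\varphi]\!]$ is defined by induction: $[\![P(\bar\tau)]\!]=[\![P]\!](\bar\tau)$; $[\![\varphi\dotminus\psi]\!]=[\![\varphi]\!]\dotminus[\![\psi]\!]$, etc.; $[\![\inf_y\varphi(\bar x,y)]\!](\bar{\mathbf a})$ is the infimum in the complete lattice $L^1(\mathcal F,[0,1])$ of $\{[\![\varphi(\bar{\mathbf a},\mathbf b)]\!]:\mathbf b\in\mathbf N\}$, and similarly for $\sup$. *)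

theory Defs
  imports "HOL-Analysis.Analysis"
begin

text \<open>The metric symbol
  d is treated separately (constructor Dist below).\<close>

record ('f, 'p) csig =
  farity :: "'f \<Rightarrow> nat"
  parity :: "'p \<Rightarrow> nat"
  fmod   :: "'f \<Rightarrow> real \<Rightarrow> real"
  pmod   :: "'p \<Rightarrow> real \<Rightarrow> real"

definition wf_csig :: "('f, 'p) csig \<Rightarrow> bool" where
  "wf_csig L \<longleftrightarrow> (\<forall>f e. e > 0 \<longrightarrow> fmod L f e > 0) \<and> (\<forall>p e. e > 0 \<longrightarrow> pmod L p e > 0)"

record ('m, 'f, 'p) lstruc =
  carrier :: "'m set"
  mdist   :: "'m \<Rightarrow> 'm \<Rightarrow> real"
  fint    :: "'f \<Rightarrow> 'm list \<Rightarrow> 'm"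
  pint    :: "'p \<Rightarrow> 'm list \<Rightarrow> real"

definition tuples :: "'a set \<Rightarrow> nat \<Rightarrow> 'a list set" where
  "tuples S n = {xs. set xs \<subseteq> S \<and> length xs = n}"

definition is_lstruc :: "('f, 'p) csig \<Rightarrow> ('m, 'f, 'p) lstruc \<Rightarrow> bool" where
  "is_lstruc L S \<longleftrightarrow>
     carrier S \<noteq> {} \<and>
     Metric_space (carrier S) (mdist S) \<and>
     Metric_space.mcomplete (carrier S) (mdist S) \<and>
     (\<forall>x\<in>carrier S. \<forall>y\<in>carrier S. mdist S x y \<le> 1) \<and>
     (\<forall>f. \<forall>xs\<in>tuples (carrier S) (farity L f). fint S f xs \<in> carrier S) \<and>
     (\<forall>p. \<forall>xs\<in>tuples (carrier S) (parity L p). pint S p xs \<in> {0..1}) \<and>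
     (\<forall>f e. e > 0 \<longrightarrow> (\<forall>xs\<in>tuples (carrier S) (farity L f). \<forall>ys\<in>tuples (carrier S) (farity L f).
         list_all2 (\<lambda>x y. mdist S x y < fmod L f e) xs ys \<longrightarrow> mdist S (fint S f xs) (fint S f ys) \<le> e)) \<and>
     (\<forall>p e. e > 0 \<longrightarrow> (\<forall>xs\<in>tuples (carrier S) (parity L p). \<forall>ys\<in>tuples (carrier S) (parity L p).
         list_all2 (\<lambda>x y. mdist S x y < pmod L p e) xs ys \<longrightarrow> \<bar>pint S p xs - pint S p ys\<bar> \<le> e))"

datatype 'f trm = Var nat | Fn 'f "'f trm list"

datatype ('f, 'p) fml =
    Pred 'p "'f trm list"
  | Dist "'f trm" "'f trm"
  | Zero
  | Neg "('f, 'p) fml"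
  | Half "('f, 'p) fml"
  | Minus "('f, 'p) fml" "('f, 'p) fml"
  | Sup nat "('f, 'p) fml"
  | Inf nat "('f, 'p) fml"

fun wf_trm :: "('f, 'p) csig \<Rightarrow> 'f trm \<Rightarrow> bool" where
  "wf_trm L (Var i) = True"
| "wf_trm L (Fn f ts) = (length ts = farity L f \<and> (\<forall>t\<in>set ts. wf_trm L t))"

fun wf_fml :: "('f, 'p) csig \<Rightarrow> ('f, 'p) fml \<Rightarrow> bool" where
  "wf_fml L (Pred p ts) = (length ts = parity L p \<and> (\<forall>t\<in>set ts. wf_trm L t))"
| "wf_fml L (Dist t u) = (wf_trm L t \<and> wf_trm L u)"
| "wf_fml L Zero = True"
| "wf_fml L (Neg \<phi>) = wf_fml L \<phi>"
| "wf_fml L (Half \<phi>) = wf_fml L \<phi>"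
| "wf_fml L (Minus \<phi> \<psi>) = (wf_fml L \<phi> \<and> wf_fml L \<psi>)"
| "wf_fml L (Sup x \<phi>) = wf_fml L \<phi>"
| "wf_fml L (Inf x \<phi>) = wf_fml L \<phi>"

fun tval :: "('m, 'f, 'p) lstruc \<Rightarrow> (nat \<Rightarrow> 'm) \<Rightarrow> 'f trm \<Rightarrow> 'm" where
  "tval S \<sigma> (Var i) = \<sigma> i"
| "tval S \<sigma> (Fn f ts) = fint S f (map (tval S \<sigma>) ts)"

fun fval :: "('m, 'f, 'p) lstruc \<Rightarrow> (nat \<Rightarrow> 'm) \<Rightarrow> ('f, 'p) fml \<Rightarrow> real" where
  "fval S \<sigma> (Pred p ts) = pint S p (map (tval S \<sigma>) ts)"
| "fval S \<sigma> (Dist t u) = mdist S (tval S \<sigma> t) (tval S \<sigma> u)"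
| "fval S \<sigma> Zero = 0"
| "fval S \<sigma> (Neg \<phi>) = 1 - fval S \<sigma> \<phi>"
| "fval S \<sigma> (Half \<phi>) = fval S \<sigma> \<phi> / 2"
| "fval S \<sigma> (Minus \<phi> \<psi>) = max (fval S \<sigma> \<phi> - fval S \<sigma> \<psi>) 0"
| "fval S \<sigma> (Sup x \<phi>) = (SUP b\<in>carrier S. fval S (\<sigma>(x := b)) \<phi>)"
| "fval S \<sigma> (Inf x \<phi>) = (INF b\<in>carrier S. fval S (\<sigma>(x := b)) \<phi>)"

definition prodM :: "('w \<Rightarrow> ('m, 'f, 'p) lstruc) \<Rightarrow> ('w \<Rightarrow> 'm) set" where
  "prodM Ms = {a. \<forall>w. a w \<in> carrier (Ms w)}"

definition unitA :: "('w \<Rightarrow> real) set" where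
  "unitA = {X. \<forall>w. X w \<in> {0..1}}"

definition integration_functional :: "(('w \<Rightarrow> real) \<Rightarrow> real) \<Rightarrow> bool" where
  "integration_functional E \<longleftrightarrow>
     (\<forall>X\<in>unitA. E X \<in> {0..1}) \<and> E (\<lambda>w. 1) = 1 \<and>
     (\<forall>X Y. X \<in> unitA \<longrightarrow> Y \<in> unitA \<longrightarrow> (\<lambda>w. X w + Y w) \<in> unitA \<longrightarrow>
        E (\<lambda>w. X w + Y w) = E X + E Y)"

definition pw_fun :: "('w \<Rightarrow> ('m, 'f, 'p) lstruc) \<Rightarrow> 'f \<Rightarrow> ('w \<Rightarrow> 'm) list \<Rightarrow> ('w \<Rightarrow> 'm)" where
  "pw_fun Ms f as = (\<lambda>w. fint (Ms w) f (map (\<lambda>a. a w) as))"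

definition pw_pred :: "('w \<Rightarrow> ('m, 'f, 'p) lstruc) \<Rightarrow> 'p \<Rightarrow> ('w \<Rightarrow> 'm) list \<Rightarrow> ('w \<Rightarrow> real)" where
  "pw_pred Ms p as = (\<lambda>w. pint (Ms w) p (map (\<lambda>a. a w) as))"

definition pw_dist :: "('w \<Rightarrow> ('m, 'f, 'p) lstruc) \<Rightarrow> ('w \<Rightarrow> 'm) \<Rightarrow> ('w \<Rightarrow> 'm) \<Rightarrow> ('w \<Rightarrow> real)" where
  "pw_dist Ms a b = (\<lambda>w. mdist (Ms w) (a w) (b w))"

text \<open>The random variable \<langle>phi(a)\<rangle> : w \<mapsto> phi^{M_w}(a(w)).\<close>
definition rv_fml :: "('w \<Rightarrow> ('m, 'f, 'p) lstruc) \<Rightarrow> (nat \<Rightarrow> ('w \<Rightarrow> 'm)) \<Rightarrow> ('f, 'p) fml \<Rightarrow> ('w \<Rightarrow> real)" where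
  "rv_fml Ms as \<phi> = (\<lambda>w. fval (Ms w) (\<lambda>i. as i w) \<phi>)"

definition dM :: "(('w \<Rightarrow> real) \<Rightarrow> real) \<Rightarrow> ('w \<Rightarrow> ('m, 'f, 'p) lstruc) \<Rightarrow> ('w \<Rightarrow> 'm) \<Rightarrow> ('w \<Rightarrow> 'm) \<Rightarrow> real" where
  "dM E Ms a b = E (pw_dist Ms a b)"

definition dA :: "(('w \<Rightarrow> real) \<Rightarrow> real) \<Rightarrow> ('w \<Rightarrow> real) \<Rightarrow> ('w \<Rightarrow> real) \<Rightarrow> real" where
  "dA E X Y = E (\<lambda>w. \<bar>X w - Y w\<bar>)"

definition full :: "('w \<Rightarrow> 'm) set \<Rightarrow> ('w \<Rightarrow> real) set \<Rightarrow> bool" where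
  "full M A \<longleftrightarrow> (\<forall>a\<in>M. \<forall>b\<in>M. \<forall>X\<in>A. \<exists>c\<in>M. \<forall>w.
      (X w = 1 \<longrightarrow> c w = a w) \<and> (X w = 0 \<longrightarrow> c w = b w))"

record ('n, 'b, 'f, 'p) rstruc =
  mainN  :: "'n set"
  distN  :: "'n \<Rightarrow> 'n \<Rightarrow> real"
  auxB   :: "'b set"
  distB  :: "'b \<Rightarrow> 'b \<Rightarrow> real"
  funN   :: "'f \<Rightarrow> 'n list \<Rightarrow> 'n"
  predN  :: "'p \<Rightarrow> 'n list \<Rightarrow> 'b"
  dsymN  :: "'n \<Rightarrow> 'n \<Rightarrow> 'b"
  zeroB  :: "'b"
  negB   :: "'b \<Rightarrow> 'b"
  halfB  :: "'b \<Rightarrow> 'b"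
  minusB :: "'b \<Rightarrow> 'b \<Rightarrow> 'b"

definition cont_tuples :: "'a set \<Rightarrow> ('a \<Rightarrow> 'a \<Rightarrow> real) \<Rightarrow> nat \<Rightarrow> ('b \<Rightarrow> 'b \<Rightarrow> real) \<Rightarrow> ('a list \<Rightarrow> 'b) \<Rightarrow> bool" where
  "cont_tuples S d n d' g \<longleftrightarrow>
     (\<forall>xs\<in>tuples S n. \<forall>e>0. \<exists>\<delta>>0. \<forall>ys\<in>tuples S n.
        list_all2 (\<lambda>x y. d x y < \<delta>) xs ys \<longrightarrow> d' (g xs) (g ys) < e)"

text \<open>The completion of the quotient by distance zero: a complete metric space
  with a distance-preserving map (the canonical map) with dense image.\<close>
definition is_completion :: "'a set \<Rightarrow> ('a \<Rightarrow> 'a \<Rightarrow> real) \<Rightarrow> 'c set \<Rightarrow> ('c \<Rightarrow> 'c \<Rightarrow> real) \<Rightarrow> ('a \<Rightarrow> 'c) \<Rightarrow> bool" where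
  "is_completion S d T d' e \<longleftrightarrow>
     Metric_space T d' \<and> Metric_space.mcomplete T d' \<and>
     e ` S \<subseteq> T \<and> (\<forall>x\<in>S. \<forall>y\<in>S. d' (e x) (e y) = d x y) \<and>
     (\<forall>z\<in>T. \<forall>\<epsilon>>0. \<exists>x\<in>S. d' z (e x) < \<epsilon>)"

text \<open>(R, cM, cA) is the L^R-structure associated to the pre-structure (M, A):
  both sorts are completions of the quotients, with canonical maps cM and cA,
  and all symbols are interpreted by the (unique) continuous extensions of the
  pointwise operations of the pre-structure.\<close>
definition is_assoc_struct ::
  "('f, 'p) csig \<Rightarrow> ('w \<Rightarrow> ('m, 'f, 'p) lstruc) \<Rightarrow> (('w \<Rightarrow> real) \<Rightarrow> real) \<Rightarrow>
   ('n, 'b, 'f, 'p) rstruc \<Rightarrow> (('w \<Rightarrow> 'm) \<Rightarrow> 'n) \<Rightarrow> (('w \<Rightarrow> real) \<Rightarrow> 'b) \<Rightarrow> bool" where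
  "is_assoc_struct L Ms E R cM cA \<longleftrightarrow>
     is_completion (prodM Ms) (dM E Ms) (mainN R) (distN R) cM \<and>
     is_completion unitA (dA E) (auxB R) (distB R) cA \<and>
     (\<forall>f. (\<forall>xs\<in>tuples (mainN R) (farity L f). funN R f xs \<in> mainN R) \<and>
          (\<forall>as\<in>tuples (prodM Ms) (farity L f). funN R f (map cM as) = cM (pw_fun Ms f as)) \<and>
          cont_tuples (mainN R) (distN R) (farity L f) (distN R) (funN R f)) \<and>
     (\<forall>p. (\<forall>xs\<in>tuples (mainN R) (parity L p). predN R p xs \<in> auxB R) \<and>
          (\<forall>as\<in>tuples (prodM Ms) (parity L p). predN R p (map cM as) = cA (pw_pred Ms p as)) \<and>
          cont_tuples (mainN R) (distN R) (parity L p) (distB R) (predN R p)) \<and>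
     (\<forall>x\<in>mainN R. \<forall>y\<in>mainN R. dsymN R x y \<in> auxB R) \<and>
     (\<forall>a\<in>prodM Ms. \<forall>b\<in>prodM Ms. dsymN R (cM a) (cM b) = cA (pw_dist Ms a b)) \<and>
     cont_tuples (mainN R) (distN R) 2 (distB R) (\<lambda>xs. dsymN R (xs ! 0) (xs ! 1)) \<and>
     zeroB R = cA (\<lambda>w. 0) \<and>
     (\<forall>x\<in>auxB R. negB R x \<in> auxB R \<and> halfB R x \<in> auxB R) \<and>
     (\<forall>x\<in>auxB R. \<forall>y\<in>auxB R. minusB R x y \<in> auxB R) \<and>
     (\<forall>X\<in>unitA. negB R (cA X) = cA (\<lambda>w. 1 - X w)) \<and>
     (\<forall>X\<in>unitA. halfB R (cA X) = cA (\<lambda>w. X w / 2)) \<and>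
     (\<forall>X\<in>unitA. \<forall>Y\<in>unitA. minusB R (cA X) (cA Y) = cA (\<lambda>w. max (X w - Y w) 0)) \<and>
     cont_tuples (auxB R) (distB R) 1 (distB R) (\<lambda>xs. negB R (xs ! 0)) \<and>
     cont_tuples (auxB R) (distB R) 1 (distB R) (\<lambda>xs. halfB R (xs ! 0)) \<and>
     cont_tuples (auxB R) (distB R) 2 (distB R) (\<lambda>xs. minusB R (xs ! 0) (xs ! 1))"

text \<open>The lattice order of the auxiliary sort (which is isomorphic to
  L^1(F,[0,1]) as a structure in the connectives): X \<le> Y iff X -. Y = 0.
  Infima / suprema in this complete lattice.\<close>
definition leB :: "('n, 'b, 'f, 'p) rstruc \<Rightarrow> 'b \<Rightarrow> 'b \<Rightarrow> bool" where
  "leB R X Y \<longleftrightarrow> minusB R X Y = zeroB R"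

definition InfB :: "('n, 'b, 'f, 'p) rstruc \<Rightarrow> 'b set \<Rightarrow> 'b" where
  "InfB R S = (THE z. z \<in> auxB R \<and> (\<forall>s\<in>S. leB R z s) \<and>
                      (\<forall>u\<in>auxB R. (\<forall>s\<in>S. leB R u s) \<longrightarrow> leB R u z))"

definition SupB :: "('n, 'b, 'f, 'p) rstruc \<Rightarrow> 'b set \<Rightarrow> 'b" where
  "SupB R S = (THE z. z \<in> auxB R \<and> (\<forall>s\<in>S. leB R s z) \<and>
                      (\<forall>u\<in>auxB R. (\<forall>s\<in>S. leB R s u) \<longrightarrow> leB R z u))"

text \<open>The interpretation [[phi]] in the L^R-structure R.\<close>
fun tvalR :: "('n, 'b, 'f, 'p) rstruc \<Rightarrow> (nat \<Rightarrow> 'n) \<Rightarrow> 'f trm \<Rightarrow> 'n" where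
  "tvalR R \<tau> (Var i) = \<tau> i"
| "tvalR R \<tau> (Fn f ts) = funN R f (map (tvalR R \<tau>) ts)"

fun fvalR :: "('n, 'b, 'f, 'p) rstruc \<Rightarrow> (nat \<Rightarrow> 'n) \<Rightarrow> ('f, 'p) fml \<Rightarrow> 'b" where
  "fvalR R \<tau> (Pred p ts) = predN R p (map (tvalR R \<tau>) ts)"
| "fvalR R \<tau> (Dist t u) = dsymN R (tvalR R \<tau> t) (tvalR R \<tau> u)"
| "fvalR R \<tau> Zero = zeroB R"
| "fvalR R \<tau> (Neg \<phi>) = negB R (fvalR R \<tau> \<phi>)"
| "fvalR R \<tau> (Half \<phi>) = halfB R (fvalR R \<tau> \<phi>)"
| "fvalR R \<tau> (Minus \<phi> \<psi>) = minusB R (fvalR R \<tau> \<phi>) (fvalR R \<tau> \<psi>)"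
| "fvalR R \<tau> (Sup x \<phi>) = SupB R ((\<lambda>b. fvalR R (\<tau>(x := b)) \<phi>) ` mainN R)"
| "fvalR R \<tau> (Inf x \<phi>) = InfB R ((\<lambda>b. fvalR R (\<tau>(x := b)) \<phi>) ` mainN R)"

end

theory Submission
  imports Defs
begin

context fixes E :: "('w \<Rightarrow> real) \<Rightarrow> real"
  assumes IF: "integration_functional E"
begin

lemma E_range: "X \<in> unitA \<Longrightarrow> 0 \<le> E X \<and> E X \<le> 1"
  using IF unfolding integration_functional_def by auto

lemma E_add: "X \<in> unitA \<Longrightarrow> Y \<in> unitA \<Longrightarrow> (\<lambda>w. X w + Y w) \<in> unitA \<Longrightarrow> E (\<lambda>w. X w + Y w) = E X + E Y"
  using IF unfolding integration_functional_def by blast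

lemma E_one: "E (\<lambda>w. 1) = 1"
  using IF unfolding integration_functional_def by blast

lemma zero_unitA: "(\<lambda>w. 0) \<in> unitA" by (simp add: unitA_def)

lemma E_zero: "E (\<lambda>w. 0) = 0"
proof -
  have "E (\<lambda>w. 0 + 0) = E (\<lambda>w. 0) + E (\<lambda>w. 0)" by (rule E_add) (simp_all add: unitA_def)
  then show ?thesis by simp
qed

lemma E_mono: assumes "X \<in> unitA" "Y \<in> unitA" "\<And>w. X w \<le> Y w" shows "E X \<le> E Y"
proof -
  let ?D = "\<lambda>w. Y w - X w"
  have "?D w \<in> {0..1}" for w
  proof -
    have "X w \<in> {0..1}" "Y w \<in> {0..1}" using assms(1,2) unfolding unitA_def by auto
    then show ?thesis using assms(3)[of w] by auto
  qed
  then have D: "?D \<in> unitA" unfolding unitA_def by blast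
  have "E (\<lambda>w. X w + ?D w) = E X + E ?D"
    by (rule E_add[OF assms(1) D]) (use assms(2) in simp)
  then show ?thesis using E_range[OF D] by simp
qed

lemma E_mult: assumes "Z \<in> unitA" "(\<lambda>w. real k * Z w) \<in> unitA"
  shows "E (\<lambda>w. real k * Z w) = real k * E Z"
  using assms(2)
proof (induction k)
  case 0 then show ?case using E_zero by simp
next
  case (Suc k)
  have Z: "\<And>w. 0 \<le> Z w" using assms(1) unfolding unitA_def by auto
  have "real k * Z w \<in> {0..1}" for w
  proof -
    have "real (Suc k) * Z w \<le> 1" using Suc.prems unfolding unitA_def by auto
    moreover have "real k * Z w \<le> real (Suc k) * Z w" using Z[of w] by (intro mult_right_mono) auto
    ultimately show ?thesis using Z[of w] by auto
  qed
  then have "(\<lambda>w. real k * Z w) \<in> unitA" unfolding unitA_def by blast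
  then have IH: "E (\<lambda>w. real k * Z w) = real k * E Z" using Suc.IH by blast
  have "E (\<lambda>w. real k * Z w + Z w) = E (\<lambda>w. real k * Z w) + E Z"
    by (rule E_add) (use \<open>(\<lambda>w. real k * Z w) \<in> unitA\<close> assms(1) Suc.prems in \<open>auto simp: algebra_simps\<close>)
  moreover have "(\<lambda>w. real (Suc k) * Z w) = (\<lambda>w. real k * Z w + Z w)" by (auto simp: algebra_simps)
  ultimately show ?case using IH by (simp add: algebra_simps)
qed

lemma E_le_mult: assumes "X \<in> unitA" "Y \<in> unitA" "k \<ge> 1" "\<And>w. X w \<le> real k * Y w"
  shows "E X \<le> real k * E Y"
proof -
  let ?Z = "\<lambda>w. X w / real k"
  have kp: "real k > 0" using assms(3) by simp
  have "X w / real k \<in> {0..1}" for w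
  proof -
    have "0 \<le> X w" "X w \<le> 1" using assms(1) unfolding unitA_def by auto
    moreover have "1 \<le> real k" using assms(3) by simp
    ultimately show ?thesis using kp by (auto simp: divide_le_eq)
  qed
  then have Z: "?Z \<in> unitA" unfolding unitA_def by auto
  have eq: "(\<lambda>w. real k * ?Z w) = X" using kp by auto
  have "E X = E (\<lambda>w. real k * ?Z w)" by (simp only: eq)
  also have "\<dots> = real k * E ?Z" by (rule E_mult[OF Z]) (simp only: eq assms(1))
  finally have "E X = real k * E ?Z" .
  moreover have "E ?Z \<le> E Y" by (rule E_mono[OF Z assms(2)]) (use assms(4) kp in \<open>simp add: divide_simps mult.commute\<close>)
  ultimately show ?thesis using kp by simp
qed

lemma E_const: "E (\<lambda>w. 1 / real (Suc n)) = 1 / real (Suc n)"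
proof -
  have Z: "(\<lambda>w. 1 / real (Suc n)) \<in> unitA" unfolding unitA_def by auto
  have eq: "(\<lambda>w. real (Suc n) * (1 / real (Suc n))) = (\<lambda>w. 1)" by simp
  have "E (\<lambda>w. 1) = E (\<lambda>w. real (Suc n) * (1 / real (Suc n)))" by (simp only: eq)
  also have "\<dots> = real (Suc n) * E (\<lambda>w. 1 / real (Suc n))"
    by (rule E_mult[OF Z]) (simp add: unitA_def)
  finally have "E (\<lambda>w. 1) = real (Suc n) * E (\<lambda>w. 1 / real (Suc n))" .
  then show ?thesis using E_one by (simp add: field_simps)
qed

lemma E_sub: assumes "X \<in> unitA" "Y \<in> unitA" "Z \<in> unitA" "\<And>w. Z w \<le> X w + Y w"
  shows "E Z \<le> E X + E Y"
proof -
  let ?A = "\<lambda>w. min (Z w) (X w)" and ?B = "\<lambda>w. Z w - min (Z w) (X w)"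
  have b: "0 \<le> X w \<and> X w \<le> 1 \<and> 0 \<le> Z w \<and> Z w \<le> 1" for w using assms unfolding unitA_def by auto
  have "?A w \<in> {0..1} \<and> ?B w \<in> {0..1}" for w using b[of w] by (auto simp: min_def)
  then have A: "?A \<in> unitA" and B: "?B \<in> unitA" unfolding unitA_def by auto
  have "E (\<lambda>w. ?A w + ?B w) = E ?A + E ?B" by (rule E_add[OF A B]) (use assms(3) in simp)
  moreover have "E ?A \<le> E X" by (rule E_mono[OF A assms(1)]) simp
  moreover have "?B w \<le> Y w" for w using assms(4)[of w] assms(2) unfolding unitA_def by (auto simp add: min_def)
  then have "E ?B \<le> E Y" by (rule E_mono[OF B assms(2)])
  ultimately show ?thesis by simp
qed

lemma E_small: assumes "e > 0" shows "\<exists>c>0. c \<le> 1 \<and> E (\<lambda>w. c) < e"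
proof -
  obtain n where "1 / real (Suc n) < e" using assms nat_approx_posE by blast
  then show ?thesis using E_const[of n] by (intro exI[of _ "1 / real (Suc n)"]) auto
qed

end

definition tvp :: "('w \<Rightarrow> ('m, 'f, 'p) lstruc) \<Rightarrow> (nat \<Rightarrow> 'w \<Rightarrow> 'm) \<Rightarrow> 'f trm \<Rightarrow> 'w \<Rightarrow> 'm" where
  "tvp Ms A t = (\<lambda>w. tval (Ms w) (\<lambda>i. A i w) t)"

lemma tvp_Fn: "tvp Ms A (Fn f ts) = pw_fun Ms f (map (tvp Ms A) ts)"
  by (simp add: tvp_def pw_fun_def o_def)

lemma rv_Pred: "rv_fml Ms A (Pred p ts) = pw_pred Ms p (map (tvp Ms A) ts)"
  by (simp add: tvp_def rv_fml_def pw_pred_def o_def)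

lemma rv_Dist: "rv_fml Ms A (Dist t u) = pw_dist Ms (tvp Ms A t) (tvp Ms A u)"
  by (simp add: tvp_def rv_fml_def pw_dist_def)

lemma lstruc_D: assumes "is_lstruc L S"
  shows lstruc_ne: "carrier S \<noteq> {}"
    and lstruc_metric: "Metric_space (carrier S) (mdist S)"
    and lstruc_le1: "\<forall>x\<in>carrier S. \<forall>y\<in>carrier S. mdist S x y \<le> 1"
    and lstruc_fun: "\<forall>f. \<forall>xs\<in>tuples (carrier S) (farity L f). fint S f xs \<in> carrier S"
    and lstruc_pred: "\<forall>p. \<forall>xs\<in>tuples (carrier S) (parity L p). pint S p xs \<in> {0..1}"
    and lstruc_fcont: "\<forall>f e. e > 0 \<longrightarrow> (\<forall>xs\<in>tuples (carrier S) (farity L f). \<forall>ys\<in>tuples (carrier S) (farity L f).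
         list_all2 (\<lambda>x y. mdist S x y < fmod L f e) xs ys \<longrightarrow> mdist S (fint S f xs) (fint S f ys) \<le> e)"
    and lstruc_pcont: "\<forall>p e. e > 0 \<longrightarrow> (\<forall>xs\<in>tuples (carrier S) (parity L p). \<forall>ys\<in>tuples (carrier S) (parity L p).
         list_all2 (\<lambda>x y. mdist S x y < pmod L p e) xs ys \<longrightarrow> \<bar>pint S p xs - pint S p ys\<bar> \<le> e)"
  using assms unfolding is_lstruc_def apply -
  apply (elim conjE, assumption)+
  done

lemma lstruc_dist: "is_lstruc L S \<Longrightarrow> x \<in> carrier S \<Longrightarrow> y \<in> carrier S \<Longrightarrow> mdist S x y \<in> {0..1}"
proof -
  assume a: "is_lstruc L S" "x \<in> carrier S" "y \<in> carrier S"
  have "0 \<le> mdist S x y" using Metric_space.nonneg[OF lstruc_metric[OF a(1)]] .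
  moreover have "mdist S x y \<le> 1" using lstruc_le1[OF a(1)] a by blast
  ultimately show ?thesis by simp
qed

lemma tuples_map: "(\<forall>t\<in>set ts. g t \<in> S) \<Longrightarrow> map g ts \<in> tuples S (length ts)"
  by (auto simp: tuples_def)

lemma tval_carrier: assumes "is_lstruc L S" "\<forall>i. \<sigma> i \<in> carrier S"
  shows "wf_trm L t \<Longrightarrow> tval S \<sigma> t \<in> carrier S"
proof (induction t)
  case (Var x) then show ?case using assms by simp
next
  case (Fn f ts)
  then have "map (tval S \<sigma>) ts \<in> tuples (carrier S) (farity L f)"
    by (auto simp: tuples_def)
  then show ?case using lstruc_fun[OF assms(1)] by simp
qed

lemma fval_range: assumes "is_lstruc L S"
  shows "wf_fml L \<phi> \<Longrightarrow> \<forall>i. \<sigma> i \<in> carrier S \<Longrightarrow> fval S \<sigma> \<phi> \<in> {0..1}"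
proof (induction \<phi> arbitrary: \<sigma>)
  case (Pred p ts)
  then have "map (tval S \<sigma>) ts \<in> tuples (carrier S) (parity L p)"
    using tval_carrier[OF assms] by (auto simp: tuples_def)
  then show ?case using lstruc_pred[OF assms] by simp
next
  case (Dist t u)
  then show ?case using tval_carrier[OF assms] lstruc_dist[OF assms] by simp
next
  case (Sup x \<phi>)
  have ne: "carrier S \<noteq> {}" using lstruc_ne[OF assms] .
  have r: "\<And>b. b \<in> carrier S \<Longrightarrow> fval S (\<sigma>(x := b)) \<phi> \<in> {0..1}"
    using Sup by auto
  obtain b0 where b0: "b0 \<in> carrier S" using ne by blast
  have bdd: "bdd_above ((\<lambda>b. fval S (\<sigma>(x := b)) \<phi>) ` carrier S)"
    using r by (intro bdd_aboveI[of _ 1]) auto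
  have "(SUP b\<in>carrier S. fval S (\<sigma>(x := b)) \<phi>) \<le> 1" using ne r by (intro cSUP_least) auto
  moreover have "0 \<le> (SUP b\<in>carrier S. fval S (\<sigma>(x := b)) \<phi>)"
    using r[OF b0] by (intro cSUP_upper2[OF bdd b0]) auto
  ultimately show ?case by simp
next
  case (Inf x \<phi>)
  have ne: "carrier S \<noteq> {}" using lstruc_ne[OF assms] .
  have r: "\<And>b. b \<in> carrier S \<Longrightarrow> fval S (\<sigma>(x := b)) \<phi> \<in> {0..1}"
    using Inf by auto
  obtain b0 where b0: "b0 \<in> carrier S" using ne by blast
  have bdd: "bdd_below ((\<lambda>b. fval S (\<sigma>(x := b)) \<phi>) ` carrier S)"
    using r by (intro bdd_belowI[of _ 0]) auto
  have "0 \<le> (INF b\<in>carrier S. fval S (\<sigma>(x := b)) \<phi>)" using ne r by (intro cINF_greatest) auto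
  moreover have "(INF b\<in>carrier S. fval S (\<sigma>(x := b)) \<phi>) \<le> 1"
    using r[OF b0] by (intro cINF_lower2[OF bdd b0]) auto
  ultimately show ?case by simp
next
  case (Neg \<phi>) then have "fval S \<sigma> \<phi> \<in> {0..1}" by simp
  then show ?case by simp
next
  case (Half \<phi>) then have "fval S \<sigma> \<phi> \<in> {0..1}" by simp
  then show ?case by simp
next
  case (Minus \<phi> \<psi>) then have "fval S \<sigma> \<phi> \<in> {0..1}" "fval S \<sigma> \<psi> \<in> {0..1}" by simp_all
  then show ?case by simp
qed simp

lemma sup_pick:
  fixes f g :: "'a \<Rightarrow> real"
  assumes "S \<noteq> {}" "\<And>x. x \<in> S \<Longrightarrow> f x \<in> {0..1}" "\<And>x. x \<in> S \<Longrightarrow> g x \<in> {0..1}" "c > 0"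
  shows "\<exists>m\<in>S. \<bar>(SUP x\<in>S. f x) - (SUP x\<in>S. g x)\<bar> \<le> \<bar>f m - g m\<bar> + c"
proof -
  have bf: "bdd_above (f ` S)" using assms(2) by (intro bdd_aboveI[of _ 1]) auto
  have bg: "bdd_above (g ` S)" using assms(3) by (intro bdd_aboveI[of _ 1]) auto
  show ?thesis
  proof (cases "(SUP x\<in>S. g x) \<le> (SUP x\<in>S. f x)")
    case True
    have "(SUP x\<in>S. f x) - c < (SUP x\<in>S. f x)" using assms(4) by simp
    then obtain m where m: "m \<in> S" "(SUP x\<in>S. f x) - c < f m" using less_cSUP_iff[OF assms(1) bf] by blast
    have "g m \<le> (SUP x\<in>S. g x)" by (rule cSUP_upper[OF m(1) bg])
    then show ?thesis using m True by (intro bexI[OF _ m(1)]) auto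
  next
    case False
    have "(SUP x\<in>S. g x) - c < (SUP x\<in>S. g x)" using assms(4) by simp
    then obtain m where m: "m \<in> S" "(SUP x\<in>S. g x) - c < g m" using less_cSUP_iff[OF assms(1) bg] by blast
    have "f m \<le> (SUP x\<in>S. f x)" by (rule cSUP_upper[OF m(1) bf])
    then show ?thesis using m False by (intro bexI[OF _ m(1)]) auto
  qed
qed

lemma inf_pick:
  fixes f g :: "'a \<Rightarrow> real"
  assumes "S \<noteq> {}" "\<And>x. x \<in> S \<Longrightarrow> f x \<in> {0..1}" "\<And>x. x \<in> S \<Longrightarrow> g x \<in> {0..1}" "c > 0"
  shows "\<exists>m\<in>S. \<bar>(INF x\<in>S. f x) - (INF x\<in>S. g x)\<bar> \<le> \<bar>f m - g m\<bar> + c"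
proof -
  have bf: "bdd_below (f ` S)" using assms(2) by (intro bdd_belowI[of _ 0]) auto
  have bg: "bdd_below (g ` S)" using assms(3) by (intro bdd_belowI[of _ 0]) auto
  show ?thesis
  proof (cases "(INF x\<in>S. g x) \<le> (INF x\<in>S. f x)")
    case True
    have "(INF x\<in>S. g x) < (INF x\<in>S. g x) + c" using assms(4) by simp
    then obtain m where m: "m \<in> S" "g m < (INF x\<in>S. g x) + c" using cINF_less_iff[OF assms(1) bg] by blast
    have "(INF x\<in>S. f x) \<le> f m" by (rule cINF_lower[OF bf m(1)])
    then show ?thesis using m True by (intro bexI[OF _ m(1)]) auto
  next
    case False
    have "(INF x\<in>S. f x) < (INF x\<in>S. f x) + c" using assms(4) by simp
    then obtain m where m: "m \<in> S" "f m < (INF x\<in>S. f x) + c" using cINF_less_iff[OF assms(1) bf] by blast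
    have "(INF x\<in>S. g x) \<le> g m" by (rule cINF_lower[OF bg m(1)])
    then show ?thesis using m False by (intro bexI[OF _ m(1)]) auto
  qed
qed

lemma finite_delta:
  fixes P :: "'a \<Rightarrow> real \<Rightarrow> bool"
  assumes "\<forall>t\<in>set ts. \<exists>\<delta>>0. P t \<delta>" "\<And>t \<delta> \<delta>'. P t \<delta> \<Longrightarrow> 0 < \<delta>' \<Longrightarrow> \<delta>' \<le> \<delta> \<Longrightarrow> P t \<delta>'"
  shows "\<exists>\<delta>>0. \<forall>t\<in>set ts. P t \<delta>"
  using assms(1)
proof (induction ts)
  case Nil show ?case by (intro exI[of _ "1::real"]) simp
next
  case (Cons a ts)
  then obtain d1 where d1: "d1 > 0" "\<forall>t\<in>set ts. P t d1" by auto
  obtain d2 where d2: "d2 > 0" "P a d2" using Cons.prems by auto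
  show ?case using d1 d2 assms(2)[of _ _ "min d1 d2"]
    by (intro exI[of _ "min d1 d2"]) auto
qed

lemma rv_upd: "rv_fml Ms (A(x := bb)) \<phi> w = fval (Ms w) ((\<lambda>i. A i w)(x := bb w)) \<phi>"
  unfolding rv_fml_def by (rule arg_cong[where f="\<lambda>s. fval (Ms w) s \<phi>"]) (auto simp: fun_eq_iff)

lemma list_all2_map_same: "(\<forall>t\<in>set ts. P (g t) (h t)) \<Longrightarrow> list_all2 P (map g ts) (map h ts)"
  by (simp add: list_all2_map1 list_all2_map2 list_all2_same)

lemma mtri: assumes "Metric_space M d" "a \<in> M" "b \<in> M" "a' \<in> M" "b' \<in> M"
  shows "\<bar>d a b - d a' b'\<bar> \<le> d a a' + d b b'"
proof -
  interpret Metric_space M d by fact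
  have "d a b \<le> d a a' + d a' b" "d a' b \<le> d a' b' + d b' b"
    "d a' b' \<le> d a' a + d a b'" "d a b' \<le> d a b + d b b'"
    using triangle assms by auto
  then show ?thesis using commute[of a a'] commute[of b b'] by linarith
qed

locale preS =
  fixes L :: "('f, 'p) csig" and Ms :: "'w \<Rightarrow> ('m, 'f, 'p) lstruc" and E :: "('w \<Rightarrow> real) \<Rightarrow> real"
  assumes wfL: "wf_csig L" and ST: "\<forall>w. is_lstruc L (Ms w)" and IF: "integration_functional E"
begin

lemmas E_mono = E_mono[OF IF] and E_sub = E_sub[OF IF] and E_le_mult = E_le_mult[OF IF]
  and E_small = E_small[OF IF] and E_zero = E_zero[OF IF] and E_range = E_range[OF IF]

lemma prod_tvp: assumes "wf_trm L t" "\<forall>i. A i \<in> prodM Ms" shows "tvp Ms A t \<in> prodM Ms"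
proof -
  have "tval (Ms w) (\<lambda>i. A i w) t \<in> carrier (Ms w)" for w
    by (rule tval_carrier[OF ST[rule_format] _ assms(1)]) (use assms(2) in \<open>simp add: prodM_def\<close>)
  then show ?thesis unfolding prodM_def tvp_def by simp
qed

lemma rv_unitA: assumes "wf_fml L \<phi>" "\<forall>i. A i \<in> prodM Ms" shows "rv_fml Ms A \<phi> \<in> unitA"
proof -
  have "fval (Ms w) (\<lambda>i. A i w) \<phi> \<in> {0..1}" for w
    by (rule fval_range[OF ST[rule_format] assms(1)]) (use assms(2) in \<open>simp add: prodM_def\<close>)
  then show ?thesis unfolding unitA_def rv_fml_def by simp
qed

lemma pwd_unitA: assumes "a \<in> prodM Ms" "b \<in> prodM Ms" shows "pw_dist Ms a b \<in> unitA"
proof -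
  have "mdist (Ms w) (a w) (b w) \<in> {0..1}" for w
    by (rule lstruc_dist[OF ST[rule_format]]) (use assms in \<open>simp_all add: prodM_def\<close>)
  then show ?thesis unfolding unitA_def pw_dist_def by simp
qed

lemma abs_unitA: assumes "X \<in> unitA" "Y \<in> unitA" shows "(\<lambda>w. \<bar>X w - Y w\<bar>) \<in> unitA"
proof -
  have "\<bar>X w - Y w\<bar> \<in> {0..1}" for w
  proof -
    have "X w \<in> {0..1}" "Y w \<in> {0..1}" using assms unfolding unitA_def by auto
    then show ?thesis by (auto simp: abs_le_iff)
  qed
  then show ?thesis unfolding unitA_def by simp
qed

lemma dM_self: "a \<in> prodM Ms \<Longrightarrow> dM E Ms a a = 0"
proof -
  assume a: "a \<in> prodM Ms"
  have "pw_dist Ms a a = (\<lambda>w. 0)" unfolding pw_dist_def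
    using Metric_space.zero[OF lstruc_metric[OF ST[rule_format]]] a by (auto simp: prodM_def)
  then show ?thesis unfolding dM_def using E_zero by simp
qed

lemma ind_list:
  assumes "\<eta> > 0" "N \<ge> 1" "real N * \<eta> \<ge> 1" "\<forall>D\<in>set Ds. D \<in> unitA \<and> E D \<le> b"
  shows "E (\<lambda>w. if \<exists>D\<in>set Ds. \<eta> \<le> D w then 1 else 0) \<le> real (length Ds) * (real N * b)"
  using assms(4)
proof (induction Ds)
  case Nil then show ?case using E_zero by simp
next
  case (Cons D Ds)
  let ?Y = "\<lambda>w. if \<exists>D\<in>set (D # Ds). \<eta> \<le> D w then 1 else (0::real)"
  let ?Y1 = "\<lambda>w. if \<eta> \<le> D w then 1 else (0::real)"
  let ?Y2 = "\<lambda>w. if \<exists>D\<in>set Ds. \<eta> \<le> D w then 1 else (0::real)"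
  have D: "D \<in> unitA" "E D \<le> b" using Cons.prems by auto
  have u: "?Y \<in> unitA" "?Y1 \<in> unitA" "?Y2 \<in> unitA" unfolding unitA_def by auto
  have "E ?Y \<le> E ?Y1 + E ?Y2" by (rule E_sub[OF u(2,3,1)]) auto
  moreover have "E ?Y1 \<le> real N * E D"
  proof (rule E_le_mult[OF u(2) D(1) assms(2)])
    fix w
    have "0 \<le> D w" using D(1) unfolding unitA_def by auto
    moreover have "\<eta> \<le> D w \<Longrightarrow> 1 \<le> real N * D w"
      using assms(3) mult_left_mono[of \<eta> "D w" "real N"] by linarith
    ultimately show "?Y1 w \<le> real N * D w" by auto
  qed
  moreover have "E ?Y2 \<le> real (length Ds) * (real N * b)" using Cons by auto
  ultimately show ?case using D(2) mult_left_mono[OF D(2), of "real N"] by (simp add: algebra_simps)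
qed

lemma est:
  assumes "Z \<in> unitA" "0 \<le> c" "c \<le> 1" "\<eta> > 0" "N \<ge> 1" "real N * \<eta> \<ge> 1"
    "\<forall>D\<in>set Ds. D \<in> unitA \<and> E D \<le> b"
    "\<And>w. (\<forall>D\<in>set Ds. D w < \<eta>) \<Longrightarrow> Z w \<le> c"
  shows "E Z \<le> E (\<lambda>w. c) + real (length Ds) * (real N * b)"
proof -
  let ?Y = "\<lambda>w. if \<exists>D\<in>set Ds. \<eta> \<le> D w then 1 else (0::real)"
  have u: "?Y \<in> unitA" "(\<lambda>w. c) \<in> unitA" unfolding unitA_def using assms(2,3) by auto
  have "Z w \<le> c + ?Y w" for w
  proof (cases "\<exists>D\<in>set Ds. \<eta> \<le> D w")
    case True
    have "Z w \<le> 1" using assms(1) unfolding unitA_def by auto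
    then show ?thesis using True assms(2) by auto
  next
    case False then show ?thesis using assms(8)[of w] by force
  qed
  then have "E Z \<le> E (\<lambda>w. c) + E ?Y" by (intro E_sub[OF u(2,1) assms(1)])
  then show ?thesis using ind_list[OF assms(4,5,6,7)] by simp
qed

lemma N_exists: "\<eta> > 0 \<Longrightarrow> \<exists>N::nat. N \<ge> 1 \<and> real N * \<eta> \<ge> 1"
proof -
  assume h: "\<eta> > 0"
  obtain N :: nat where "1 / \<eta> \<le> real N" using real_arch_simple by blast
  then have "real (N + 1) * \<eta> \<ge> 1" using h by (simp add: divide_le_eq algebra_simps)
  then show ?thesis by (intro exI[of _ "N + 1"]) auto
qed

end

lemma arith_b: assumes "(N::nat) \<ge> 1" "(e::real) > 0"
  shows "real k * (real N * (e / (2 * (real k + 1) * real N))) \<le> e / 2"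
proof -
  have "real N * (e / (2 * (real k + 1) * real N)) = e / (2 * (real k + 1))" using assms(1) by simp
  then have "real k * (real N * (e / (2 * (real k + 1) * real N))) = (e/2) * (real k / (real k + 1))" by simp
  also have "\<dots> \<le> (e/2) * 1" by (rule mult_left_mono) (use assms(2) in auto)
  finally show ?thesis by simp
qed

lemma b_pos: "(N::nat) \<ge> 1 \<Longrightarrow> (e::real) > 0 \<Longrightarrow> e / (2 * (real k + 1) * real N) > 0"
  by simp

context preS begin

lemma fmod_pos: "c > 0 \<Longrightarrow> fmod L f c > 0" using wfL unfolding wf_csig_def by blast
lemma pmod_pos: "c > 0 \<Longrightarrow> pmod L p c > 0" using wfL unfolding wf_csig_def by blast

lemma tvp_w: "tvp Ms A (Fn f ts) w = fint (Ms w) f (map (\<lambda>t. tvp Ms A t w) ts)"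
  by (simp add: tvp_Fn pw_fun_def o_def)

lemma tvp_Var: "tvp Ms A (Var i) = A i"
  by (simp add: tvp_def)

lemma tvp_carr: "wf_trm L t \<Longrightarrow> \<forall>i. A i \<in> prodM Ms \<Longrightarrow> tvp Ms A t w \<in> carrier (Ms w)"
  using prod_tvp unfolding prodM_def by blast

lemma tvp_unif: "wf_trm L t \<Longrightarrow> \<forall>\<epsilon>>0. \<exists>\<delta>>0. \<forall>A B. (\<forall>i. A i \<in> prodM Ms) \<longrightarrow> (\<forall>i. B i \<in> prodM Ms) \<longrightarrow>
   (\<forall>i. dM E Ms (A i) (B i) < \<delta>) \<longrightarrow> dM E Ms (tvp Ms A t) (tvp Ms B t) < \<epsilon>"
proof (induction t)
  case (Var i)
  then show ?case by (auto simp: tvp_Var)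
next
  case (Fn f ts)
  show ?case
  proof (intro allI impI)
    fix \<epsilon> :: real assume ep: "\<epsilon> > 0"
    obtain c where c: "c > 0" "c \<le> 1" "E (\<lambda>w. c) < \<epsilon>/2" using E_small[of "\<epsilon>/2"] ep by auto
    define \<eta> where "\<eta> = fmod L f c"
    have eta: "\<eta> > 0" using fmod_pos[OF c(1)] \<eta>_def by simp
    obtain N where N: "N \<ge> 1" "real N * \<eta> \<ge> 1" using N_exists[OF eta] by blast
    define k where "k = length ts"
    define b where "b = \<epsilon> / (2 * (real k + 1) * real N)"
    have bpos: "b > 0" unfolding b_def using N(1) ep by simp
    have wfts: "length ts = farity L f" "\<forall>t\<in>set ts. wf_trm L t" using Fn.prems by auto
    have "\<forall>t\<in>set ts. \<exists>\<delta>>0. (\<forall>A B. (\<forall>i. A i \<in> prodM Ms) \<longrightarrow> (\<forall>i. B i \<in> prodM Ms) \<longrightarrow>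
       (\<forall>i. dM E Ms (A i) (B i) < \<delta>) \<longrightarrow> dM E Ms (tvp Ms A t) (tvp Ms B t) < b)"
      using Fn.IH wfts(2) bpos by blast
    then obtain \<delta> where d: "\<delta> > 0" "\<forall>t\<in>set ts. \<forall>A B. (\<forall>i. A i \<in> prodM Ms) \<longrightarrow> (\<forall>i. B i \<in> prodM Ms) \<longrightarrow>
       (\<forall>i. dM E Ms (A i) (B i) < \<delta>) \<longrightarrow> dM E Ms (tvp Ms A t) (tvp Ms B t) < b"
      using finite_delta[where P="\<lambda>t \<delta>. \<forall>A B. (\<forall>i. A i \<in> prodM Ms) \<longrightarrow> (\<forall>i. B i \<in> prodM Ms) \<longrightarrow>
       (\<forall>i. dM E Ms (A i) (B i) < \<delta>) \<longrightarrow> dM E Ms (tvp Ms A t) (tvp Ms B t) < b"]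
      by (smt (verit, best))
    show "\<exists>\<delta>>0. \<forall>A B. (\<forall>i. A i \<in> prodM Ms) \<longrightarrow> (\<forall>i. B i \<in> prodM Ms) \<longrightarrow>
       (\<forall>i. dM E Ms (A i) (B i) < \<delta>) \<longrightarrow> dM E Ms (tvp Ms A (Fn f ts)) (tvp Ms B (Fn f ts)) < \<epsilon>"
    proof (intro exI[of _ \<delta>] conjI allI impI)
      fix A B :: "nat \<Rightarrow> 'w \<Rightarrow> 'm" assume A: "\<forall>i. A i \<in> prodM Ms" and B: "\<forall>i. B i \<in> prodM Ms"
        and AB: "\<forall>i. dM E Ms (A i) (B i) < \<delta>"
      let ?Z = "pw_dist Ms (tvp Ms A (Fn f ts)) (tvp Ms B (Fn f ts))"
      let ?Ds = "map (\<lambda>t. pw_dist Ms (tvp Ms A t) (tvp Ms B t)) ts"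
      have wfF: "wf_trm L (Fn f ts)" using Fn.prems .
      have Z: "?Z \<in> unitA" by (rule pwd_unitA[OF prod_tvp[OF wfF A] prod_tvp[OF wfF B]])
      have Ds: "\<forall>D\<in>set ?Ds. D \<in> unitA \<and> E D \<le> b"
      proof
        fix D assume "D \<in> set ?Ds"
        then obtain t where t: "t \<in> set ts" "D = pw_dist Ms (tvp Ms A t) (tvp Ms B t)" by auto
        have "D \<in> unitA" using t pwd_unitA prod_tvp wfts(2) A B by metis
        moreover have "E D < b" using d(2) t A B AB unfolding dM_def by blast
        ultimately show "D \<in> unitA \<and> E D \<le> b" by simp
      qed
      have cond: "?Z w \<le> c" if h: "\<forall>D\<in>set ?Ds. D w < \<eta>" for w
      proof -
        let ?xs = "map (\<lambda>t. tvp Ms A t w) ts" and ?ys = "map (\<lambda>t. tvp Ms B t w) ts"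
        have xs: "?xs \<in> tuples (carrier (Ms w)) (farity L f)" "?ys \<in> tuples (carrier (Ms w)) (farity L f)"
          using tvp_carr wfts A B by (auto simp: tuples_def)
        have "list_all2 (\<lambda>x y. mdist (Ms w) x y < fmod L f c) ?xs ?ys"
          by (rule list_all2_map_same) (use h in \<open>auto simp: \<eta>_def pw_dist_def\<close>)
        then have "mdist (Ms w) (fint (Ms w) f ?xs) (fint (Ms w) f ?ys) \<le> c"
          using lstruc_fcont[OF ST[rule_format, of w]] c(1) xs by blast
        then show ?thesis by (simp add: pw_dist_def tvp_w)
      qed
      have "E ?Z \<le> E (\<lambda>w. c) + real (length ?Ds) * (real N * b)"
        by (rule est[OF Z _ c(2) eta N Ds cond]) (use c in auto)
      moreover have "real (length ?Ds) * (real N * b) \<le> \<epsilon>/2"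
        unfolding b_def k_def using arith_b[OF N(1) ep] by simp
      ultimately show "dM E Ms (tvp Ms A (Fn f ts)) (tvp Ms B (Fn f ts)) < \<epsilon>"
        unfolding dM_def using c(3) by linarith
    qed (use d in auto)
  qed
qed

end

context preS begin

definition UCf where "UCf \<phi> \<longleftrightarrow> (\<forall>\<epsilon>>0. \<exists>\<delta>>0. \<forall>A B. (\<forall>i. A i \<in> prodM Ms) \<longrightarrow> (\<forall>i. B i \<in> prodM Ms) \<longrightarrow>
   (\<forall>i. dM E Ms (A i) (B i) < \<delta>) \<longrightarrow> dA E (rv_fml Ms A \<phi>) (rv_fml Ms B \<phi>) < \<epsilon>)"

lemma rv_Pred_w: "rv_fml Ms A (Pred p ts) w = pint (Ms w) p (map (\<lambda>t. tvp Ms A t w) ts)"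
  by (simp add: rv_Pred pw_pred_def o_def)

lemma upd_carr: "\<forall>i. A i \<in> prodM Ms \<Longrightarrow> m \<in> carrier (Ms w) \<Longrightarrow> \<forall>i. ((\<lambda>i. A i w)(x := m)) i \<in> carrier (Ms w)"
  by (auto simp: prodM_def)

lemma upd_prod: "\<forall>i. A i \<in> prodM Ms \<Longrightarrow> b \<in> prodM Ms \<Longrightarrow> \<forall>i. (A(x := b)) i \<in> prodM Ms"
  by auto

lemma UCf_Pred: assumes "wf_fml L (Pred p ts)" shows "UCf (Pred p ts)"
  unfolding UCf_def
proof (intro allI impI)
  fix \<epsilon> :: real assume ep: "\<epsilon> > 0"
  obtain c where c: "c > 0" "c \<le> 1" "E (\<lambda>w. c) < \<epsilon>/2" using E_small[of "\<epsilon>/2"] ep by auto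
  define \<eta> where "\<eta> = pmod L p c"
  have eta: "\<eta> > 0" using pmod_pos[OF c(1)] \<eta>_def by simp
  obtain N where N: "N \<ge> 1" "real N * \<eta> \<ge> 1" using N_exists[OF eta] by blast
  define k where "k = length ts"
  define b where "b = \<epsilon> / (2 * (real k + 1) * real N)"
  have bpos: "b > 0" unfolding b_def using N(1) ep by simp
  have wfts: "length ts = parity L p" "\<forall>t\<in>set ts. wf_trm L t" using assms by auto
  have "\<forall>t\<in>set ts. \<exists>\<delta>>0. (\<forall>A B. (\<forall>i. A i \<in> prodM Ms) \<longrightarrow> (\<forall>i. B i \<in> prodM Ms) \<longrightarrow>
     (\<forall>i. dM E Ms (A i) (B i) < \<delta>) \<longrightarrow> dM E Ms (tvp Ms A t) (tvp Ms B t) < b)"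
    using tvp_unif wfts(2) bpos by blast
  then obtain \<delta> where d: "\<delta> > 0" "\<forall>t\<in>set ts. \<forall>A B. (\<forall>i. A i \<in> prodM Ms) \<longrightarrow> (\<forall>i. B i \<in> prodM Ms) \<longrightarrow>
     (\<forall>i. dM E Ms (A i) (B i) < \<delta>) \<longrightarrow> dM E Ms (tvp Ms A t) (tvp Ms B t) < b"
    using finite_delta[where P="\<lambda>t \<delta>. \<forall>A B. (\<forall>i. A i \<in> prodM Ms) \<longrightarrow> (\<forall>i. B i \<in> prodM Ms) \<longrightarrow>
     (\<forall>i. dM E Ms (A i) (B i) < \<delta>) \<longrightarrow> dM E Ms (tvp Ms A t) (tvp Ms B t) < b"]
    by (smt (verit, best))
  show "\<exists>\<delta>>0. \<forall>A B. (\<forall>i. A i \<in> prodM Ms) \<longrightarrow> (\<forall>i. B i \<in> prodM Ms) \<longrightarrow>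
     (\<forall>i. dM E Ms (A i) (B i) < \<delta>) \<longrightarrow> dA E (rv_fml Ms A (Pred p ts)) (rv_fml Ms B (Pred p ts)) < \<epsilon>"
  proof (intro exI[of _ \<delta>] conjI allI impI)
    fix A B :: "nat \<Rightarrow> 'w \<Rightarrow> 'm" assume A: "\<forall>i. A i \<in> prodM Ms" and B: "\<forall>i. B i \<in> prodM Ms"
      and AB: "\<forall>i. dM E Ms (A i) (B i) < \<delta>"
    let ?Z = "\<lambda>w. \<bar>rv_fml Ms A (Pred p ts) w - rv_fml Ms B (Pred p ts) w\<bar>"
    let ?Ds = "map (\<lambda>t. pw_dist Ms (tvp Ms A t) (tvp Ms B t)) ts"
    have Z: "?Z \<in> unitA" by (rule abs_unitA[OF rv_unitA[OF assms A] rv_unitA[OF assms B]])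
    have Ds: "\<forall>D\<in>set ?Ds. D \<in> unitA \<and> E D \<le> b"
    proof
      fix D assume "D \<in> set ?Ds"
      then obtain t where t: "t \<in> set ts" "D = pw_dist Ms (tvp Ms A t) (tvp Ms B t)" by auto
      have "D \<in> unitA" using t pwd_unitA prod_tvp wfts(2) A B by metis
      moreover have "E D < b" using d(2) t A B AB unfolding dM_def by blast
      ultimately show "D \<in> unitA \<and> E D \<le> b" by simp
    qed
    have cond: "?Z w \<le> c" if h: "\<forall>D\<in>set ?Ds. D w < \<eta>" for w
    proof -
      let ?xs = "map (\<lambda>t. tvp Ms A t w) ts" and ?ys = "map (\<lambda>t. tvp Ms B t w) ts"
      have xs: "?xs \<in> tuples (carrier (Ms w)) (parity L p)" "?ys \<in> tuples (carrier (Ms w)) (parity L p)"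
        using tvp_carr wfts A B by (auto simp: tuples_def)
      have "list_all2 (\<lambda>x y. mdist (Ms w) x y < pmod L p c) ?xs ?ys"
        by (rule list_all2_map_same) (use h in \<open>auto simp: \<eta>_def pw_dist_def\<close>)
      then have "\<bar>pint (Ms w) p ?xs - pint (Ms w) p ?ys\<bar> \<le> c"
        using lstruc_pcont[OF ST[rule_format, of w]] c(1) xs by blast
      then show ?thesis by (simp add: rv_Pred_w)
    qed
    have "E ?Z \<le> E (\<lambda>w. c) + real (length ?Ds) * (real N * b)"
      by (rule est[OF Z _ c(2) eta N Ds cond]) (use c in auto)
    moreover have "real (length ?Ds) * (real N * b) \<le> \<epsilon>/2"
      unfolding b_def k_def using arith_b[OF N(1) ep] by simp
    ultimately show "dA E (rv_fml Ms A (Pred p ts)) (rv_fml Ms B (Pred p ts)) < \<epsilon>"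
      unfolding dA_def using c(3) by linarith
  qed (use d in auto)
qed

lemma UCf_Dist: assumes "wf_fml L (Dist t u)" shows "UCf (Dist t u)"
  unfolding UCf_def
proof (intro allI impI)
  fix \<epsilon> :: real assume ep: "\<epsilon> > 0"
  have wf: "wf_trm L t" "wf_trm L u" using assms by auto
  obtain d1 where d1: "d1 > 0" "\<forall>A B. (\<forall>i. A i \<in> prodM Ms) \<longrightarrow> (\<forall>i. B i \<in> prodM Ms) \<longrightarrow>
     (\<forall>i. dM E Ms (A i) (B i) < d1) \<longrightarrow> dM E Ms (tvp Ms A t) (tvp Ms B t) < \<epsilon>/2"
    using tvp_unif[OF wf(1)] ep by (meson half_gt_zero)
  obtain d2 where d2: "d2 > 0" "\<forall>A B. (\<forall>i. A i \<in> prodM Ms) \<longrightarrow> (\<forall>i. B i \<in> prodM Ms) \<longrightarrow>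
     (\<forall>i. dM E Ms (A i) (B i) < d2) \<longrightarrow> dM E Ms (tvp Ms A u) (tvp Ms B u) < \<epsilon>/2"
    using tvp_unif[OF wf(2)] ep by (meson half_gt_zero)
  show "\<exists>\<delta>>0. \<forall>A B. (\<forall>i. A i \<in> prodM Ms) \<longrightarrow> (\<forall>i. B i \<in> prodM Ms) \<longrightarrow>
     (\<forall>i. dM E Ms (A i) (B i) < \<delta>) \<longrightarrow> dA E (rv_fml Ms A (Dist t u)) (rv_fml Ms B (Dist t u)) < \<epsilon>"
  proof (intro exI[of _ "min d1 d2"] conjI allI impI)
    fix A B :: "nat \<Rightarrow> 'w \<Rightarrow> 'm" assume A: "\<forall>i. A i \<in> prodM Ms" and B: "\<forall>i. B i \<in> prodM Ms"
      and AB: "\<forall>i. dM E Ms (A i) (B i) < min d1 d2"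
    have e1: "E (pw_dist Ms (tvp Ms A t) (tvp Ms B t)) < \<epsilon>/2" using d1(2) A B AB unfolding dM_def by simp
    have e2: "E (pw_dist Ms (tvp Ms A u) (tvp Ms B u)) < \<epsilon>/2" using d2(2) A B AB unfolding dM_def by simp
    have "E (\<lambda>w. \<bar>rv_fml Ms A (Dist t u) w - rv_fml Ms B (Dist t u) w\<bar>)
      \<le> E (pw_dist Ms (tvp Ms A t) (tvp Ms B t)) + E (pw_dist Ms (tvp Ms A u) (tvp Ms B u))"
    proof (rule E_sub)
      show "pw_dist Ms (tvp Ms A t) (tvp Ms B t) \<in> unitA" "pw_dist Ms (tvp Ms A u) (tvp Ms B u) \<in> unitA"
        using pwd_unitA prod_tvp wf A B by auto
      show "(\<lambda>w. \<bar>rv_fml Ms A (Dist t u) w - rv_fml Ms B (Dist t u) w\<bar>) \<in> unitA"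
        by (rule abs_unitA[OF rv_unitA[OF assms A] rv_unitA[OF assms B]])
      fix w
      show "\<bar>rv_fml Ms A (Dist t u) w - rv_fml Ms B (Dist t u) w\<bar>
         \<le> pw_dist Ms (tvp Ms A t) (tvp Ms B t) w + pw_dist Ms (tvp Ms A u) (tvp Ms B u) w"
        unfolding rv_Dist pw_dist_def
        by (rule mtri[OF lstruc_metric[OF ST[rule_format]]]) (use tvp_carr wf A B in auto)
    qed
    then show "dA E (rv_fml Ms A (Dist t u)) (rv_fml Ms B (Dist t u)) < \<epsilon>"
      unfolding dA_def using e1 e2 by linarith
  qed (use d1 d2 in auto)
qed

end

lemma half_abs: "\<bar>(a::real)/2 - b/2\<bar> \<le> \<bar>a - b\<bar>" by linarith
lemma max_abs: "\<bar>max ((a::real) - b) 0 - max (a' - b') 0\<bar> \<le> \<bar>a - a'\<bar> + \<bar>b - b'\<bar>" by (simp add: max_def abs_le_iff) linarith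

context preS begin

lemma UCf_Zero: "UCf Zero"
  unfolding UCf_def dA_def rv_fml_def using E_zero by auto

lemma dA_Neg: "dA E (rv_fml Ms A (Neg \<phi>)) (rv_fml Ms B (Neg \<phi>)) = dA E (rv_fml Ms A \<phi>) (rv_fml Ms B \<phi>)"
proof -
  have "(\<lambda>w. \<bar>rv_fml Ms A (Neg \<phi>) w - rv_fml Ms B (Neg \<phi>) w\<bar>) = (\<lambda>w. \<bar>rv_fml Ms A \<phi> w - rv_fml Ms B \<phi> w\<bar>)"
    by (auto simp: rv_fml_def abs_minus_commute)
  then show ?thesis unfolding dA_def by simp
qed

lemma UCf_Neg: "UCf \<phi> \<Longrightarrow> UCf (Neg \<phi>)"
  unfolding UCf_def dA_Neg by blast

lemma UCf_Half: assumes "wf_fml L \<phi>" "UCf \<phi>" shows "UCf (Half \<phi>)"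
  unfolding UCf_def
proof (intro allI impI)
  fix \<epsilon> :: real assume ep: "\<epsilon> > 0"
  then obtain \<delta> where d: "\<delta> > 0" "\<forall>A B. (\<forall>i. A i \<in> prodM Ms) \<longrightarrow> (\<forall>i. B i \<in> prodM Ms) \<longrightarrow>
     (\<forall>i. dM E Ms (A i) (B i) < \<delta>) \<longrightarrow> dA E (rv_fml Ms A \<phi>) (rv_fml Ms B \<phi>) < \<epsilon>"
    using assms(2) unfolding UCf_def by blast
  show "\<exists>\<delta>>0. \<forall>A B. (\<forall>i. A i \<in> prodM Ms) \<longrightarrow> (\<forall>i. B i \<in> prodM Ms) \<longrightarrow>
     (\<forall>i. dM E Ms (A i) (B i) < \<delta>) \<longrightarrow> dA E (rv_fml Ms A (Half \<phi>)) (rv_fml Ms B (Half \<phi>)) < \<epsilon>"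
  proof (intro exI[of _ \<delta>] conjI allI impI)
    fix A B :: "nat \<Rightarrow> 'w \<Rightarrow> 'm" assume A: "\<forall>i. A i \<in> prodM Ms" and B: "\<forall>i. B i \<in> prodM Ms"
      and AB: "\<forall>i. dM E Ms (A i) (B i) < \<delta>"
    have wf: "wf_fml L (Half \<phi>)" using assms by simp
    have "dA E (rv_fml Ms A (Half \<phi>)) (rv_fml Ms B (Half \<phi>)) \<le> dA E (rv_fml Ms A \<phi>) (rv_fml Ms B \<phi>)"
      unfolding dA_def
      by (rule E_mono[OF abs_unitA[OF rv_unitA[OF wf A] rv_unitA[OF wf B]] abs_unitA[OF rv_unitA[OF assms(1) A] rv_unitA[OF assms(1) B]]])
         (simp add: rv_fml_def half_abs)
    moreover have "dA E (rv_fml Ms A \<phi>) (rv_fml Ms B \<phi>) < \<epsilon>" using d(2) A B AB by blast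
    ultimately show "dA E (rv_fml Ms A (Half \<phi>)) (rv_fml Ms B (Half \<phi>)) < \<epsilon>" by linarith
  qed (use d in auto)
qed

lemma UCf_Minus: assumes "wf_fml L \<phi>" "wf_fml L \<psi>" "UCf \<phi>" "UCf \<psi>" shows "UCf (Minus \<phi> \<psi>)"
  unfolding UCf_def
proof (intro allI impI)
  fix \<epsilon> :: real assume ep: "\<epsilon> > 0"
  obtain d1 where d1: "d1 > 0" "\<forall>A B. (\<forall>i. A i \<in> prodM Ms) \<longrightarrow> (\<forall>i. B i \<in> prodM Ms) \<longrightarrow>
     (\<forall>i. dM E Ms (A i) (B i) < d1) \<longrightarrow> dA E (rv_fml Ms A \<phi>) (rv_fml Ms B \<phi>) < \<epsilon>/2"
    using assms(3) ep unfolding UCf_def by (meson half_gt_zero)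
  obtain d2 where d2: "d2 > 0" "\<forall>A B. (\<forall>i. A i \<in> prodM Ms) \<longrightarrow> (\<forall>i. B i \<in> prodM Ms) \<longrightarrow>
     (\<forall>i. dM E Ms (A i) (B i) < d2) \<longrightarrow> dA E (rv_fml Ms A \<psi>) (rv_fml Ms B \<psi>) < \<epsilon>/2"
    using assms(4) ep unfolding UCf_def by (meson half_gt_zero)
  show "\<exists>\<delta>>0. \<forall>A B. (\<forall>i. A i \<in> prodM Ms) \<longrightarrow> (\<forall>i. B i \<in> prodM Ms) \<longrightarrow>
     (\<forall>i. dM E Ms (A i) (B i) < \<delta>) \<longrightarrow> dA E (rv_fml Ms A (Minus \<phi> \<psi>)) (rv_fml Ms B (Minus \<phi> \<psi>)) < \<epsilon>"
  proof (intro exI[of _ "min d1 d2"] conjI allI impI)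
    fix A B :: "nat \<Rightarrow> 'w \<Rightarrow> 'm" assume A: "\<forall>i. A i \<in> prodM Ms" and B: "\<forall>i. B i \<in> prodM Ms"
      and AB: "\<forall>i. dM E Ms (A i) (B i) < min d1 d2"
    have wf: "wf_fml L (Minus \<phi> \<psi>)" using assms by simp
    have e1: "dA E (rv_fml Ms A \<phi>) (rv_fml Ms B \<phi>) < \<epsilon>/2" using d1(2) A B AB by simp
    have e2: "dA E (rv_fml Ms A \<psi>) (rv_fml Ms B \<psi>) < \<epsilon>/2" using d2(2) A B AB by simp
    have "dA E (rv_fml Ms A (Minus \<phi> \<psi>)) (rv_fml Ms B (Minus \<phi> \<psi>))
       \<le> dA E (rv_fml Ms A \<phi>) (rv_fml Ms B \<phi>) + dA E (rv_fml Ms A \<psi>) (rv_fml Ms B \<psi>)"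
      unfolding dA_def
      by (rule E_sub[OF abs_unitA[OF rv_unitA[OF assms(1) A] rv_unitA[OF assms(1) B]]
              abs_unitA[OF rv_unitA[OF assms(2) A] rv_unitA[OF assms(2) B]]
              abs_unitA[OF rv_unitA[OF wf A] rv_unitA[OF wf B]]])
         (simp only: rv_fml_def fval.simps max_abs)
    then show "dA E (rv_fml Ms A (Minus \<phi> \<psi>)) (rv_fml Ms B (Minus \<phi> \<psi>)) < \<epsilon>" using e1 e2 by linarith
  qed (use d1 d2 in auto)
qed

end

context preS begin

lemma UCf_SupInf:
  assumes wf: "wf_fml L \<phi>" and uc: "UCf \<phi>"
    and Q: "Q = Sup x \<phi> \<or> Q = Inf x \<phi>"
  shows "UCf Q"
  unfolding UCf_def
proof (intro allI impI)
  fix \<epsilon> :: real assume ep: "\<epsilon> > 0"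
  have wfQ: "wf_fml L Q" using Q wf by auto
  obtain c where c: "c > 0" "c \<le> 1" "E (\<lambda>w. c) < \<epsilon>/2" using E_small[of "\<epsilon>/2"] ep by auto
  obtain \<delta> where d: "\<delta> > 0" "\<forall>A B. (\<forall>i. A i \<in> prodM Ms) \<longrightarrow> (\<forall>i. B i \<in> prodM Ms) \<longrightarrow>
     (\<forall>i. dM E Ms (A i) (B i) < \<delta>) \<longrightarrow> dA E (rv_fml Ms A \<phi>) (rv_fml Ms B \<phi>) < \<epsilon>/2"
    using uc ep unfolding UCf_def by (meson half_gt_zero)
  show "\<exists>\<delta>>0. \<forall>A B. (\<forall>i. A i \<in> prodM Ms) \<longrightarrow> (\<forall>i. B i \<in> prodM Ms) \<longrightarrow>
     (\<forall>i. dM E Ms (A i) (B i) < \<delta>) \<longrightarrow> dA E (rv_fml Ms A Q) (rv_fml Ms B Q) < \<epsilon>"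
  proof (intro exI[of _ \<delta>] conjI allI impI)
    fix A B :: "nat \<Rightarrow> 'w \<Rightarrow> 'm" assume A: "\<forall>i. A i \<in> prodM Ms" and B: "\<forall>i. B i \<in> prodM Ms"
      and AB: "\<forall>i. dM E Ms (A i) (B i) < \<delta>"
    have "\<exists>m. m \<in> carrier (Ms w) \<and> \<bar>rv_fml Ms A Q w - rv_fml Ms B Q w\<bar> \<le>
        \<bar>fval (Ms w) ((\<lambda>i. A i w)(x := m)) \<phi> - fval (Ms w) ((\<lambda>i. B i w)(x := m)) \<phi>\<bar> + c" for w
    proof -
      have ne: "carrier (Ms w) \<noteq> {}" using lstruc_ne[OF ST[rule_format]] .
      have r1: "\<And>m. m \<in> carrier (Ms w) \<Longrightarrow> fval (Ms w) ((\<lambda>i. A i w)(x := m)) \<phi> \<in> {0..1}"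
        by (rule fval_range[OF ST[rule_format] wf upd_carr[OF A]])
      have r2: "\<And>m. m \<in> carrier (Ms w) \<Longrightarrow> fval (Ms w) ((\<lambda>i. B i w)(x := m)) \<phi> \<in> {0..1}"
        by (rule fval_range[OF ST[rule_format] wf upd_carr[OF B]])
      show ?thesis using Q
      proof
        assume Q: "Q = Sup x \<phi>"
        show ?thesis using sup_pick[of "carrier (Ms w)" "\<lambda>m. fval (Ms w) ((\<lambda>i. A i w)(x := m)) \<phi>" "\<lambda>m. fval (Ms w) ((\<lambda>i. B i w)(x := m)) \<phi>", OF ne r1 r2 c(1)] unfolding Q rv_fml_def by auto
      next
        assume Q: "Q = Inf x \<phi>"
        show ?thesis using inf_pick[of "carrier (Ms w)" "\<lambda>m. fval (Ms w) ((\<lambda>i. A i w)(x := m)) \<phi>" "\<lambda>m. fval (Ms w) ((\<lambda>i. B i w)(x := m)) \<phi>", OF ne r1 r2 c(1)] unfolding Q rv_fml_def by auto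
      qed
    qed
    then obtain bb where bb: "\<And>w. bb w \<in> carrier (Ms w)"
      "\<And>w. \<bar>rv_fml Ms A Q w - rv_fml Ms B Q w\<bar> \<le>
        \<bar>fval (Ms w) ((\<lambda>i. A i w)(x := bb w)) \<phi> - fval (Ms w) ((\<lambda>i. B i w)(x := bb w)) \<phi>\<bar> + c"
      by metis
    have bbp: "bb \<in> prodM Ms" using bb(1) by (simp add: prodM_def)
    have A': "\<forall>i. (A(x := bb)) i \<in> prodM Ms" and B': "\<forall>i. (B(x := bb)) i \<in> prodM Ms"
      using A B bbp by auto
    have AB': "\<forall>i. dM E Ms ((A(x := bb)) i) ((B(x := bb)) i) < \<delta>"
      using AB dM_self[OF bbp] d(1) by auto
    have e1: "dA E (rv_fml Ms (A(x := bb)) \<phi>) (rv_fml Ms (B(x := bb)) \<phi>) < \<epsilon>/2"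
      using d(2) A' B' AB' by blast
    have "dA E (rv_fml Ms A Q) (rv_fml Ms B Q) \<le> dA E (rv_fml Ms (A(x := bb)) \<phi>) (rv_fml Ms (B(x := bb)) \<phi>) + E (\<lambda>w. c)"
      unfolding dA_def
    proof (rule E_sub)
      show "(\<lambda>w. \<bar>rv_fml Ms (A(x := bb)) \<phi> w - rv_fml Ms (B(x := bb)) \<phi> w\<bar>) \<in> unitA"
        by (rule abs_unitA[OF rv_unitA[OF wf A'] rv_unitA[OF wf B']])
      show "(\<lambda>w. c) \<in> unitA" using c unfolding unitA_def by auto
      show "(\<lambda>w. \<bar>rv_fml Ms A Q w - rv_fml Ms B Q w\<bar>) \<in> unitA"
        by (rule abs_unitA[OF rv_unitA[OF wfQ A] rv_unitA[OF wfQ B]])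
      fix w show "\<bar>rv_fml Ms A Q w - rv_fml Ms B Q w\<bar> \<le> \<bar>rv_fml Ms (A(x := bb)) \<phi> w - rv_fml Ms (B(x := bb)) \<phi> w\<bar> + c"
        using bb(2)[of w] by (simp only: rv_upd)
    qed
    then show "dA E (rv_fml Ms A Q) (rv_fml Ms B Q) < \<epsilon>" using e1 c(3) by linarith
  qed (use d in auto)
qed

theorem rv_unif: "wf_fml L \<phi> \<Longrightarrow> UCf \<phi>"
proof (induction \<phi>)
  case (Pred p ts) then show ?case using UCf_Pred by blast
next
  case (Dist t u) then show ?case using UCf_Dist by blast
next
  case Zero then show ?case using UCf_Zero by blast
next
  case (Neg \<phi>) then show ?case using UCf_Neg by simp
next
  case (Half \<phi>) then show ?case using UCf_Half by simp
next
  case (Minus \<phi> \<psi>) then show ?case using UCf_Minus by simp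
next
  case (Sup x \<phi>) then show ?case using UCf_SupInf[of \<phi> "Sup x \<phi>" x] by simp
next
  case (Inf x \<phi>) then show ?case using UCf_SupInf[of \<phi> "Inf x \<phi>" x] by simp
qed

end

definition conv :: "('a \<Rightarrow> 'a \<Rightarrow> real) \<Rightarrow> (nat \<Rightarrow> 'a) \<Rightarrow> 'a \<Rightarrow> bool" where
  "conv d s v \<longleftrightarrow> (\<forall>\<epsilon>>0. \<exists>N. \<forall>n\<ge>N. d (s n) v < \<epsilon>)"

lemma conv_const: "d v v = 0 \<Longrightarrow> conv d (\<lambda>n. v) v"
  unfolding conv_def by auto

lemma conv_cong_ev: "conv d s v \<Longrightarrow> (\<And>n. n \<ge> N0 \<Longrightarrow> s n = s' n) \<Longrightarrow> conv d s' v"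
  unfolding conv_def by (metis le_trans nat_le_linear)

lemma conv_cong: "conv d s v \<Longrightarrow> (\<And>n. s n = s' n) \<Longrightarrow> conv d s' v"
  using conv_cong_ev[of d s v 0 s'] by auto

lemma (in Metric_space) le_eps_zero: "x \<in> M \<Longrightarrow> y \<in> M \<Longrightarrow> (\<And>\<epsilon>. \<epsilon> > 0 \<Longrightarrow> d x y < \<epsilon>) \<Longrightarrow> x = y"
  by (metis less_irrefl nonneg order_le_less zero)

lemma (in Metric_space) conv_unique: "(\<And>n. s n \<in> M) \<Longrightarrow> v \<in> M \<Longrightarrow> v' \<in> M \<Longrightarrow> conv d s v \<Longrightarrow> conv d s v' \<Longrightarrow> v = v'"
proof -
  assume s: "\<And>n. s n \<in> M" and v: "v \<in> M" "v' \<in> M" and c: "conv d s v" "conv d s v'"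
  show "v = v'"
  proof (rule le_eps_zero[OF v])
    fix \<epsilon> :: real assume "\<epsilon> > 0"
    then obtain N1 N2 where "\<forall>n\<ge>N1. d (s n) v < \<epsilon>/2" "\<forall>n\<ge>N2. d (s n) v' < \<epsilon>/2"
      using c unfolding conv_def by (meson half_gt_zero)
    then have "d (s (N1+N2)) v < \<epsilon>/2" "d (s (N1+N2)) v' < \<epsilon>/2" by auto
    moreover have "d v v' \<le> d v (s (N1+N2)) + d (s (N1+N2)) v'" using triangle s v by blast
    ultimately show "d v v' < \<epsilon>" using commute[of v "s (N1+N2)"] by linarith
  qed
qed

lemma (in Metric_space) conv_const_eq: "c \<in> M \<Longrightarrow> v \<in> M \<Longrightarrow> conv d (\<lambda>n. c) v \<Longrightarrow> c = v"
  using conv_unique[of "\<lambda>n. c" c v] conv_const[of d c] by simp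

lemma cont_conv:
  assumes com: "\<And>x y. d x y = d y x" and com': "\<And>x y. d' x y = d' y x"
    and ct: "cont_tuples S d n d' g" and xs: "xs \<in> tuples S n" and ys: "\<And>k. ys k \<in> tuples S n"
    and cv: "\<And>j. j < n \<Longrightarrow> conv d (\<lambda>k. ys k ! j) (xs ! j)"
  shows "conv d' (\<lambda>k. g (ys k)) (g xs)"
  unfolding conv_def
proof (intro allI impI)
  fix \<epsilon> :: real assume ep: "\<epsilon> > 0"
  obtain \<delta> where d: "\<delta> > 0" "\<forall>zs\<in>tuples S n. list_all2 (\<lambda>x y. d x y < \<delta>) xs zs \<longrightarrow> d' (g xs) (g zs) < \<epsilon>"
    using ct xs ep unfolding cont_tuples_def by blast
  have "\<forall>j. \<exists>N. j < n \<longrightarrow> (\<forall>k\<ge>N. d (ys k ! j) (xs ! j) < \<delta>)"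
    using cv d(1) unfolding conv_def by blast
  then obtain Nf where Nf: "\<And>j k. j < n \<Longrightarrow> k \<ge> Nf j \<Longrightarrow> d (ys k ! j) (xs ! j) < \<delta>" by metis
  show "\<exists>N. \<forall>k\<ge>N. d' (g (ys k)) (g xs) < \<epsilon>"
  proof (intro exI[of _ "\<Sum>j<n. Nf j"] allI impI)
    fix k assume k: "k \<ge> (\<Sum>j<n. Nf j)"
    have "list_all2 (\<lambda>x y. d x y < \<delta>) xs (ys k)"
    proof (rule list_all2_all_nthI)
      show "length xs = length (ys k)" using xs ys[of k] by (simp add: tuples_def)
      fix j assume j: "j < length xs"
      then have jn: "j < n" using xs by (simp add: tuples_def)
      have "Nf j \<le> (\<Sum>j<n. Nf j)" by (rule member_le_sum) (use jn in auto)
      then show "d (xs ! j) (ys k ! j) < \<delta>" using Nf[OF jn, of k] k com by simp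
    qed
    then show "d' (g (ys k)) (g xs) < \<epsilon>" using d(2) ys[of k] com' by metis
  qed
qed

locale assocS = preS L Ms E
  for L :: "('f, 'p) csig" and Ms :: "'w \<Rightarrow> ('m, 'f, 'p) lstruc" and E :: "('w \<Rightarrow> real) \<Rightarrow> real" +
  fixes R :: "('n, 'b, 'f, 'p) rstruc" and cM :: "('w \<Rightarrow> 'm) \<Rightarrow> 'n" and cA :: "('w \<Rightarrow> real) \<Rightarrow> 'b"
  assumes AS: "is_assoc_struct L Ms E R cM cA"
begin

lemma AS_D:
  shows compM: "is_completion (prodM Ms) (dM E Ms) (mainN R) (distN R) cM"
    and compA: "is_completion unitA (dA E) (auxB R) (distB R) cA"
    and funs: "\<forall>f. (\<forall>xs\<in>tuples (mainN R) (farity L f). funN R f xs \<in> mainN R) \<and>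
          (\<forall>as\<in>tuples (prodM Ms) (farity L f). funN R f (map cM as) = cM (pw_fun Ms f as)) \<and>
          cont_tuples (mainN R) (distN R) (farity L f) (distN R) (funN R f)"
    and preds: "\<forall>p. (\<forall>xs\<in>tuples (mainN R) (parity L p). predN R p xs \<in> auxB R) \<and>
          (\<forall>as\<in>tuples (prodM Ms) (parity L p). predN R p (map cM as) = cA (pw_pred Ms p as)) \<and>
          cont_tuples (mainN R) (distN R) (parity L p) (distB R) (predN R p)"
    and dsym_in: "\<forall>x\<in>mainN R. \<forall>y\<in>mainN R. dsymN R x y \<in> auxB R"
    and dsym_eq: "\<forall>a\<in>prodM Ms. \<forall>b\<in>prodM Ms. dsymN R (cM a) (cM b) = cA (pw_dist Ms a b)"
    and dsym_cont: "cont_tuples (mainN R) (distN R) 2 (distB R) (\<lambda>xs. dsymN R (xs ! 0) (xs ! 1))"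
    and zero_eq: "zeroB R = cA (\<lambda>w. 0)"
    and nh_in: "\<forall>x\<in>auxB R. negB R x \<in> auxB R \<and> halfB R x \<in> auxB R"
    and minus_in: "\<forall>x\<in>auxB R. \<forall>y\<in>auxB R. minusB R x y \<in> auxB R"
    and neg_eq: "\<forall>X\<in>unitA. negB R (cA X) = cA (\<lambda>w. 1 - X w)"
    and half_eq: "\<forall>X\<in>unitA. halfB R (cA X) = cA (\<lambda>w. X w / 2)"
    and minus_eq: "\<forall>X\<in>unitA. \<forall>Y\<in>unitA. minusB R (cA X) (cA Y) = cA (\<lambda>w. max (X w - Y w) 0)"
    and neg_cont: "cont_tuples (auxB R) (distB R) 1 (distB R) (\<lambda>xs. negB R (xs ! 0))"
    and half_cont: "cont_tuples (auxB R) (distB R) 1 (distB R) (\<lambda>xs. halfB R (xs ! 0))"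
    and minus_cont: "cont_tuples (auxB R) (distB R) 2 (distB R) (\<lambda>xs. minusB R (xs ! 0) (xs ! 1))"
  using AS unfolding is_assoc_struct_def apply -
  apply (elim conjE, assumption)+
  done

lemma comp_D: assumes "is_completion S d T d' e"
  shows "Metric_space T d'" "Metric_space.mcomplete T d'" "\<And>x. x \<in> S \<Longrightarrow> e x \<in> T"
    "\<And>x y. x \<in> S \<Longrightarrow> y \<in> S \<Longrightarrow> d' (e x) (e y) = d x y"
    "\<And>z \<epsilon>. z \<in> T \<Longrightarrow> \<epsilon> > 0 \<Longrightarrow> \<exists>x\<in>S. d' z (e x) < \<epsilon>"
  using assms unfolding is_completion_def by auto

lemma MN: "Metric_space (mainN R) (distN R)" using comp_D(1)[OF compM] .
lemma MB: "Metric_space (auxB R) (distB R)" using comp_D(1)[OF compA] .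

lemma cM_in: "a \<in> prodM Ms \<Longrightarrow> cM a \<in> mainN R" using comp_D(3)[OF compM] .
lemma cA_in: "X \<in> unitA \<Longrightarrow> cA X \<in> auxB R" using comp_D(3)[OF compA] .
lemma cM_iso: "a \<in> prodM Ms \<Longrightarrow> b \<in> prodM Ms \<Longrightarrow> distN R (cM a) (cM b) = dM E Ms a b"
  using comp_D(4)[OF compM] .
lemma cA_iso: "X \<in> unitA \<Longrightarrow> Y \<in> unitA \<Longrightarrow> distB R (cA X) (cA Y) = dA E X Y"
  using comp_D(4)[OF compA] .
lemma denseN: "z \<in> mainN R \<Longrightarrow> \<epsilon> > 0 \<Longrightarrow> \<exists>a\<in>prodM Ms. distN R z (cM a) < \<epsilon>"
  using comp_D(5)[OF compM] .
lemma denseB: "z \<in> auxB R \<Longrightarrow> \<epsilon> > 0 \<Longrightarrow> \<exists>X\<in>unitA. distB R z (cA X) < \<epsilon>"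
  using comp_D(5)[OF compA] .

lemma completeB:
  assumes s: "\<And>n. s n \<in> auxB R" and C: "\<forall>\<epsilon>>0. \<exists>N. \<forall>n n'. N \<le> n \<longrightarrow> N \<le> n' \<longrightarrow> distB R (s n) (s n') < \<epsilon>"
  shows "\<exists>v\<in>auxB R. conv (distB R) s v"
proof -
  interpret MB: Metric_space "auxB R" "distB R" by (rule MB)
  have "MB.MCauchy s" unfolding MB.MCauchy_def using s C by auto
  then obtain v where "limitin MB.mtopology s v sequentially"
    using comp_D(2)[OF compA] unfolding MB.mcomplete_def by blast
  then show ?thesis unfolding MB.limit_metric_sequentially conv_def by blast
qed

lemmas dN_com = Metric_space.commute[OF MN] and dB_com = Metric_space.commute[OF MB]

end

context assocS begin

lemma zU: "(\<lambda>w. 0) \<in> unitA" by (simp add: unitA_def)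
lemma zero_in: "zeroB R \<in> auxB R" using cA_in[OF zU] zero_eq by simp

lemma leB_img: assumes "X \<in> unitA" "Y \<in> unitA" "\<And>w. X w \<le> Y w" shows "leB R (cA X) (cA Y)"
proof -
  have "(\<lambda>w. max (X w - Y w) 0) = (\<lambda>w. 0)" using assms(3) by (auto simp: fun_eq_iff max_def)
  then show ?thesis unfolding leB_def using minus_eq assms(1,2) zero_eq by simp
qed

lemma conv2: "conv d xs x \<Longrightarrow> conv d ys y \<Longrightarrow> j < 2 \<Longrightarrow> conv d (\<lambda>k. [xs k, ys k] ! j) ([x, y] ! j)"
  by (cases j) (auto simp: less_2_cases_iff)

lemma conv1: "conv d xs x \<Longrightarrow> j < 1 \<Longrightarrow> conv d (\<lambda>k. [xs k] ! j) ([x] ! j)"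
  by simp

lemma tup2: "x \<in> S \<Longrightarrow> y \<in> S \<Longrightarrow> [x, y] \<in> tuples S 2" by (simp add: tuples_def)
lemma tup1: "x \<in> S \<Longrightarrow> [x] \<in> tuples S 1" by (simp add: tuples_def)

lemma minus_conv:
  assumes "\<And>n. xs n \<in> auxB R" "\<And>n. ys n \<in> auxB R" "x \<in> auxB R" "y \<in> auxB R"
    "conv (distB R) xs x" "conv (distB R) ys y"
  shows "conv (distB R) (\<lambda>k. minusB R (xs k) (ys k)) (minusB R x y)"
  using cont_conv[OF dB_com dB_com minus_cont tup2[OF assms(3,4)] tup2[OF assms(1,2)] conv2[OF assms(5,6)]]
  by simp

lemma leB_closed:
  assumes "\<And>n. xs n \<in> auxB R" "\<And>n. ys n \<in> auxB R" "x \<in> auxB R" "y \<in> auxB R"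
    "conv (distB R) xs x" "conv (distB R) ys y" "\<And>n. n \<ge> N0 \<Longrightarrow> leB R (xs n) (ys n)"
  shows "leB R x y"
proof -
  have "conv (distB R) (\<lambda>k. zeroB R) (minusB R x y)"
    by (rule conv_cong_ev[OF minus_conv[OF assms(1-6)], of N0]) (use assms(7) in \<open>simp add: leB_def\<close>)
  then have "zeroB R = minusB R x y"
    by (rule Metric_space.conv_const_eq[OF MB zero_in minus_in[rule_format, OF assms(3,4)]])
  then show ?thesis unfolding leB_def by simp
qed

lemma antisym:
  assumes x: "x \<in> auxB R" and y: "y \<in> auxB R" and le: "leB R x y" "leB R y x"
  shows "x = y"
proof (rule Metric_space.le_eps_zero[OF MB x y])
  interpret MB: Metric_space "auxB R" "distB R" by (rule MB)
  fix \<epsilon>0 :: real assume ep0: "\<epsilon>0 > 0"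
  define \<epsilon> where "\<epsilon> = \<epsilon>0 / 5"
  have ep: "\<epsilon> > 0" using ep0 by (simp add: \<epsilon>_def)
  obtain d1 where d1: "d1 > 0" "\<forall>zs\<in>tuples (auxB R) 2. list_all2 (\<lambda>a b. distB R a b < d1) [x, y] zs \<longrightarrow>
      distB R (minusB R x y) (minusB R (zs!0) (zs!1)) < \<epsilon>"
    using minus_cont tup2[OF x y] ep unfolding cont_tuples_def by fastforce
  obtain d2 where d2: "d2 > 0" "\<forall>zs\<in>tuples (auxB R) 2. list_all2 (\<lambda>a b. distB R a b < d2) [y, x] zs \<longrightarrow>
      distB R (minusB R y x) (minusB R (zs!0) (zs!1)) < \<epsilon>"
    using minus_cont tup2[OF y x] ep unfolding cont_tuples_def by fastforce
  define \<delta> where "\<delta> = min (min d1 d2) \<epsilon>"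
  have dp: "\<delta> > 0" using d1 d2 ep by (simp add: \<delta>_def)
  obtain X where X: "X \<in> unitA" "distB R x (cA X) < \<delta>" using denseB[OF x dp] by blast
  obtain Y where Y: "Y \<in> unitA" "distB R y (cA Y) < \<delta>" using denseB[OF y dp] by blast
  have cX: "cA X \<in> auxB R" and cY: "cA Y \<in> auxB R" using cA_in X Y by auto
  let ?P = "\<lambda>w. max (X w - Y w) 0" and ?Q = "\<lambda>w. max (Y w - X w) 0"
  have "?P w \<in> {0..1} \<and> ?Q w \<in> {0..1} \<and> ?P w + ?Q w \<in> {0..1}" for w
  proof -
    have "X w \<in> {0..1}" "Y w \<in> {0..1}" using X(1) Y(1) unfolding unitA_def by auto
    then show ?thesis by (auto simp: max_def)
  qed
  then have PQ: "?P \<in> unitA" "?Q \<in> unitA" and PQs: "(\<lambda>w. ?P w + ?Q w) \<in> unitA"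
    unfolding unitA_def by auto
  have "distB R (cA X) (cA Y) = E (\<lambda>w. ?P w + ?Q w)"
    unfolding cA_iso[OF X(1) Y(1)] dA_def by (rule arg_cong[where f=E]) (auto simp: fun_eq_iff max_def)
  also have "\<dots> = E ?P + E ?Q" by (rule E_add[OF IF PQ PQs])
  also have "E ?P = distB R (minusB R (cA X) (cA Y)) (zeroB R)"
    using minus_eq X(1) Y(1) cA_iso[OF PQ(1) zU] zero_eq by (simp add: dA_def)
  also have "E ?Q = distB R (minusB R (cA Y) (cA X)) (zeroB R)"
    using minus_eq X(1) Y(1) cA_iso[OF PQ(2) zU] zero_eq by (simp add: dA_def)
  finally have eq: "distB R (cA X) (cA Y) = distB R (minusB R (cA X) (cA Y)) (zeroB R) + distB R (minusB R (cA Y) (cA X)) (zeroB R)" .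
  have l1: "list_all2 (\<lambda>a b. distB R a b < d1) [x, y] [cA X, cA Y]" using X Y by (simp add: \<delta>_def)
  have l2: "list_all2 (\<lambda>a b. distB R a b < d2) [y, x] [cA Y, cA X]" using X Y by (simp add: \<delta>_def)
  have m1: "distB R (minusB R x y) (minusB R (cA X) (cA Y)) < \<epsilon>" using d1(2) l1 tup2[OF cX cY] by fastforce
  have m2: "distB R (minusB R y x) (minusB R (cA Y) (cA X)) < \<epsilon>" using d2(2) l2 tup2[OF cY cX] by fastforce
  have z1: "minusB R x y = zeroB R" "minusB R y x = zeroB R" using le unfolding leB_def by auto
  have "distB R x y \<le> distB R x (cA X) + distB R (cA X) y" using MB.triangle x y cX by blast
  moreover have "distB R (cA X) y \<le> distB R (cA X) (cA Y) + distB R (cA Y) y" using MB.triangle y cX cY by blast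
  moreover have "distB R (cA Y) y = distB R y (cA Y)" using MB.commute by blast
  moreover have "distB R (zeroB R) (minusB R (cA X) (cA Y)) < \<epsilon>" using m1 z1 by simp
  moreover have "distB R (zeroB R) (minusB R (cA Y) (cA X)) < \<epsilon>" using m2 z1 by simp
  moreover have "\<delta> \<le> \<epsilon>" by (simp add: \<delta>_def)
  moreover have "distB R (minusB R (cA X) (cA Y)) (zeroB R) = distB R (zeroB R) (minusB R (cA X) (cA Y))"
    "distB R (minusB R (cA Y) (cA X)) (zeroB R) = distB R (zeroB R) (minusB R (cA Y) (cA X))"
    using MB.commute by auto
  ultimately have "distB R x y < 4 * \<epsilon>"
    using eq X(2) Y(2) by linarith
  then show "distB R x y < \<epsilon>0" using ep0 unfolding \<epsilon>_def by linarith
qed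

end

context assocS begin

lemma SupB_eq:
  assumes "v \<in> auxB R" "\<forall>s\<in>S. leB R s v" "\<forall>U\<in>auxB R. (\<forall>s\<in>S. leB R s U) \<longrightarrow> leB R v U"
  shows "SupB R S = v"
  unfolding SupB_def
proof (rule the_equality)
  show "v \<in> auxB R \<and> (\<forall>s\<in>S. leB R s v) \<and> (\<forall>u\<in>auxB R. (\<forall>s\<in>S. leB R s u) \<longrightarrow> leB R v u)"
    using assms by blast
  fix z assume z: "z \<in> auxB R \<and> (\<forall>s\<in>S. leB R s z) \<and> (\<forall>u\<in>auxB R. (\<forall>s\<in>S. leB R s u) \<longrightarrow> leB R z u)"
  then have "leB R z v" "leB R v z" using assms by auto
  then show "z = v" using antisym z assms(1) by blast
qed

lemma InfB_eq:
  assumes "v \<in> auxB R" "\<forall>s\<in>S. leB R v s" "\<forall>U\<in>auxB R. (\<forall>s\<in>S. leB R U s) \<longrightarrow> leB R U v"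
  shows "InfB R S = v"
  unfolding InfB_def
proof (rule the_equality)
  show "v \<in> auxB R \<and> (\<forall>s\<in>S. leB R v s) \<and> (\<forall>u\<in>auxB R. (\<forall>s\<in>S. leB R u s) \<longrightarrow> leB R u v)"
    using assms by blast
  fix z assume z: "z \<in> auxB R \<and> (\<forall>s\<in>S. leB R z s) \<and> (\<forall>u\<in>auxB R. (\<forall>s\<in>S. leB R u s) \<longrightarrow> leB R u z)"
  then have "leB R z v" "leB R v z" using assms by auto
  then show "z = v" using antisym z assms(1) by blast
qed

definition approx :: "(nat \<Rightarrow> 'n) \<Rightarrow> (nat \<Rightarrow> nat \<Rightarrow> 'w \<Rightarrow> 'm) \<Rightarrow> bool" where
  "approx \<tau> A \<longleftrightarrow> (\<forall>n i. A n i \<in> prodM Ms) \<and> (\<forall>\<epsilon>>0. \<exists>N. \<forall>n\<ge>N. \<forall>i. distN R (cM (A n i)) (\<tau> i) < \<epsilon>)"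

lemma approx_exists: assumes "\<forall>i. \<tau> i \<in> mainN R" shows "\<exists>A. approx \<tau> A"
proof -
  have "\<forall>n i. \<exists>a. a \<in> prodM Ms \<and> distN R (\<tau> i) (cM a) < 1 / real (Suc n)"
    using denseN assms by (metis of_nat_0_less_iff zero_less_Suc zero_less_divide_1_iff)
  then obtain A where A: "\<And>n i. A n i \<in> prodM Ms" "\<And>n i. distN R (\<tau> i) (cM (A n i)) < 1 / real (Suc n)"
    by metis
  have "approx \<tau> A" unfolding approx_def
  proof (intro conjI allI impI)
    show "A n i \<in> prodM Ms" for n i by (rule A(1))
    fix \<epsilon> :: real assume "\<epsilon> > 0"
    then obtain N where N: "1 / real (Suc N) < \<epsilon>" using nat_approx_posE by blast
    show "\<exists>N. \<forall>n\<ge>N. \<forall>i. distN R (cM (A n i)) (\<tau> i) < \<epsilon>"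
    proof (intro exI[of _ N] allI impI)
      fix n i assume n: "n \<ge> N"
      have "1 / real (Suc n) \<le> 1 / real (Suc N)" using n by (simp add: frac_le)
      then show "distN R (cM (A n i)) (\<tau> i) < \<epsilon>" using A(2)[of i n] N dN_com by smt
    qed
  qed
  then show ?thesis by blast
qed

lemma approx_const: assumes "\<forall>i. as i \<in> prodM Ms" shows "approx (\<lambda>i. cM (as i)) (\<lambda>n. as)"
proof -
  have "distN R (cM (as i)) (cM (as i)) = 0" for i using assms Metric_space.zero[OF MN] cM_in by blast
  then show ?thesis unfolding approx_def using assms by auto
qed

lemma approx_prod: "approx \<tau> A \<Longrightarrow> \<forall>i. A n i \<in> prodM Ms" unfolding approx_def by blast

lemma tv_conv: "wf_trm L t \<Longrightarrow> \<forall>i. \<tau> i \<in> mainN R \<Longrightarrow> approx \<tau> A \<Longrightarrow>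
   tvalR R \<tau> t \<in> mainN R \<and> conv (distN R) (\<lambda>n. cM (tvp Ms (A n) t)) (tvalR R \<tau> t)"
proof (induction t)
  case (Var i)
  then show ?case unfolding approx_def conv_def tvp_Var tvalR.simps by blast
next
  case (Fn f ts)
  have wf: "length ts = farity L f" "\<forall>t\<in>set ts. wf_trm L t" using Fn.prems by auto
  have IH: "\<And>t. t \<in> set ts \<Longrightarrow> tvalR R \<tau> t \<in> mainN R \<and> conv (distN R) (\<lambda>n. cM (tvp Ms (A n) t)) (tvalR R \<tau> t)"
    using Fn wf by blast
  have xs: "map (tvalR R \<tau>) ts \<in> tuples (mainN R) (farity L f)" using IH wf by (auto simp: tuples_def)
  have ys: "map (\<lambda>t. cM (tvp Ms (A k) t)) ts \<in> tuples (mainN R) (farity L f)" for k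
    using wf cM_in prod_tvp approx_prod[OF Fn.prems(3)] by (auto simp: tuples_def)
  have eq: "cM (tvp Ms (A k) (Fn f ts)) = funN R f (map (\<lambda>t. cM (tvp Ms (A k) t)) ts)" for k
  proof -
    have "map (tvp Ms (A k)) ts \<in> tuples (prodM Ms) (farity L f)"
      using wf prod_tvp approx_prod[OF Fn.prems(3)] by (auto simp: tuples_def)
    then have "funN R f (map cM (map (tvp Ms (A k)) ts)) = cM (pw_fun Ms f (map (tvp Ms (A k)) ts))"
      using funs by blast
    then show ?thesis by (simp add: tvp_Fn o_def)
  qed
  have "conv (distN R) (\<lambda>k. funN R f (map (\<lambda>t. cM (tvp Ms (A k) t)) ts)) (funN R f (map (tvalR R \<tau>) ts))"
  proof (rule cont_conv[OF dN_com dN_com _ xs ys])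
    show "cont_tuples (mainN R) (distN R) (farity L f) (distN R) (funN R f)" using funs by blast
    fix j assume "j < farity L f"
    then have "ts ! j \<in> set ts" using wf by simp
    then show "conv (distN R) (\<lambda>k. map (\<lambda>t. cM (tvp Ms (A k) t)) ts ! j) (map (tvalR R \<tau>) ts ! j)"
      using IH \<open>j < farity L f\<close> wf by simp
  qed
  then show ?case using xs funs eq by (simp add: conv_def)
qed

end

context assocS begin

definition FC where "FC \<phi> \<longleftrightarrow> (\<forall>\<tau> A. (\<forall>i. \<tau> i \<in> mainN R) \<longrightarrow> approx \<tau> A \<longrightarrow>
   fvalR R \<tau> \<phi> \<in> auxB R \<and> conv (distB R) (\<lambda>n. cA (rv_fml Ms (A n) \<phi>)) (fvalR R \<tau> \<phi>))"

lemma FC_in: "FC \<phi> \<Longrightarrow> \<forall>i. \<tau> i \<in> mainN R \<Longrightarrow> fvalR R \<tau> \<phi> \<in> auxB R"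
  using approx_exists unfolding FC_def by blast

lemma unifR:
  assumes wf: "wf_fml L \<phi>" and fc: "FC \<phi>" and ep: "\<epsilon> > 0"
  shows "\<exists>\<delta>>0. \<forall>\<tau> C. (\<forall>i. \<tau> i \<in> mainN R) \<longrightarrow> (\<forall>i. C i \<in> prodM Ms) \<longrightarrow>
     (\<forall>i. distN R (cM (C i)) (\<tau> i) < \<delta>) \<longrightarrow> distB R (cA (rv_fml Ms C \<phi>)) (fvalR R \<tau> \<phi>) \<le> \<epsilon>"
proof -
  interpret MN: Metric_space "mainN R" "distN R" by (rule MN)
  interpret MB: Metric_space "auxB R" "distB R" by (rule MB)
  obtain \<delta>0 where d0: "\<delta>0 > 0" "\<forall>A B. (\<forall>i. A i \<in> prodM Ms) \<longrightarrow> (\<forall>i. B i \<in> prodM Ms) \<longrightarrow>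
     (\<forall>i. dM E Ms (A i) (B i) < \<delta>0) \<longrightarrow> dA E (rv_fml Ms A \<phi>) (rv_fml Ms B \<phi>) < \<epsilon>"
    using rv_unif[OF wf] ep unfolding UCf_def by blast
  show ?thesis
  proof (intro exI[of _ "\<delta>0/2"] conjI allI impI)
    show "\<delta>0/2 > 0" using d0 by simp
    fix \<tau> :: "nat \<Rightarrow> 'n" and C :: "nat \<Rightarrow> 'w \<Rightarrow> 'm" assume \<tau>: "\<forall>i. \<tau> i \<in> mainN R" and C: "\<forall>i. C i \<in> prodM Ms"
      and Cd: "\<forall>i. distN R (cM (C i)) (\<tau> i) < \<delta>0/2"
    obtain A where A: "approx \<tau> A" using approx_exists[OF \<tau>] by blast
    have cv: "conv (distB R) (\<lambda>n. cA (rv_fml Ms (A n) \<phi>)) (fvalR R \<tau> \<phi>)" and fin: "fvalR R \<tau> \<phi> \<in> auxB R"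
      using fc \<tau> A unfolding FC_def by auto
    have rC: "rv_fml Ms C \<phi> \<in> unitA" using rv_unitA[OF wf C] .
    show "distB R (cA (rv_fml Ms C \<phi>)) (fvalR R \<tau> \<phi>) \<le> \<epsilon>"
    proof (rule field_le_epsilon)
      fix \<eta> :: real assume eta: "\<eta> > 0"
      obtain N1 where N1: "\<forall>n\<ge>N1. distB R (cA (rv_fml Ms (A n) \<phi>)) (fvalR R \<tau> \<phi>) < \<eta>"
        using cv eta unfolding conv_def by blast
      obtain N2 where N2: "\<forall>n\<ge>N2. \<forall>i. distN R (cM (A n i)) (\<tau> i) < \<delta>0/2"
        using A d0(1) unfolding approx_def by (meson half_gt_zero)
      define n where "n = N1 + N2"
      have An: "\<forall>i. A n i \<in> prodM Ms" using approx_prod[OF A] .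
      have "dM E Ms (A n i) (C i) < \<delta>0" for i
      proof -
        have Ai: "A n i \<in> prodM Ms" and Ci: "C i \<in> prodM Ms" using An C by auto
        have "distN R (cM (A n i)) (cM (C i)) \<le> distN R (cM (A n i)) (\<tau> i) + distN R (\<tau> i) (cM (C i))"
          by (rule MN.triangle[OF cM_in[OF Ai] _ cM_in[OF Ci]]) (use \<tau> in simp)
        moreover have "distN R (\<tau> i) (cM (C i)) = distN R (cM (C i)) (\<tau> i)" by (rule MN.commute)
        moreover have "distN R (cM (A n i)) (\<tau> i) < \<delta>0/2" using N2 unfolding n_def by simp
        moreover have "distN R (cM (C i)) (\<tau> i) < \<delta>0/2" using Cd by simp
        moreover have "distN R (cM (A n i)) (cM (C i)) = dM E Ms (A n i) (C i)" by (rule cM_iso[OF Ai Ci])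
        ultimately show ?thesis by linarith
      qed
      then have "dA E (rv_fml Ms (A n) \<phi>) (rv_fml Ms C \<phi>) < \<epsilon>" using d0(2) An C by simp
      then have "distB R (cA (rv_fml Ms (A n) \<phi>)) (cA (rv_fml Ms C \<phi>)) < \<epsilon>"
        using cA_iso rv_unitA[OF wf An] rC by simp
      moreover have "distB R (cA (rv_fml Ms C \<phi>)) (fvalR R \<tau> \<phi>) \<le>
          distB R (cA (rv_fml Ms C \<phi>)) (cA (rv_fml Ms (A n) \<phi>)) + distB R (cA (rv_fml Ms (A n) \<phi>)) (fvalR R \<tau> \<phi>)"
        by (rule MB.triangle[OF cA_in[OF rC] cA_in[OF rv_unitA[OF wf An]] fin])
      moreover have "distB R (cA (rv_fml Ms (A n) \<phi>)) (fvalR R \<tau> \<phi>) < \<eta>" using N1 unfolding n_def by simp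
      ultimately show "distB R (cA (rv_fml Ms C \<phi>)) (fvalR R \<tau> \<phi>) \<le> \<epsilon> + \<eta>"
        using MB.commute[of "cA (rv_fml Ms C \<phi>)" "cA (rv_fml Ms (A n) \<phi>)"] by linarith
    qed
  qed
qed

end

context assocS begin

lemma neg_conv:
  assumes "\<And>n. xs n \<in> auxB R" "x \<in> auxB R" "conv (distB R) xs x"
  shows "conv (distB R) (\<lambda>k. negB R (xs k)) (negB R x)"
  using cont_conv[OF dB_com dB_com neg_cont tup1[OF assms(2)] tup1[OF assms(1)] conv1[OF assms(3)]]
  by simp

lemma half_conv:
  assumes "\<And>n. xs n \<in> auxB R" "x \<in> auxB R" "conv (distB R) xs x"
  shows "conv (distB R) (\<lambda>k. halfB R (xs k)) (halfB R x)"
  using cont_conv[OF dB_com dB_com half_cont tup1[OF assms(2)] tup1[OF assms(1)] conv1[OF assms(3)]]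
  by simp

lemma FC_Zero: "FC Zero"
  unfolding FC_def
proof (intro allI impI conjI)
  show "fvalR R \<tau> Zero \<in> auxB R" for \<tau> using zero_in by simp
  have "distB R (zeroB R) (zeroB R) = 0" using Metric_space.zero[OF MB] zero_in by blast
  moreover have "rv_fml Ms B Zero = (\<lambda>w. 0)" for B by (simp add: rv_fml_def)
  ultimately show "conv (distB R) (\<lambda>n. cA (rv_fml Ms (A n) Zero)) (fvalR R \<tau> Zero)" for \<tau> A
    using conv_const[of "distB R" "zeroB R"] zero_eq by simp
qed

lemma FC_Neg: assumes wf: "wf_fml L \<phi>" and fc: "FC \<phi>" shows "FC (Neg \<phi>)"
  unfolding FC_def
proof (intro allI impI)
  fix \<tau> A assume \<tau>: "\<forall>i. \<tau> i \<in> mainN R" and A: "approx \<tau> A"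
  have c: "fvalR R \<tau> \<phi> \<in> auxB R" "conv (distB R) (\<lambda>n. cA (rv_fml Ms (A n) \<phi>)) (fvalR R \<tau> \<phi>)"
    using fc \<tau> A unfolding FC_def by auto
  have u: "rv_fml Ms (A n) \<phi> \<in> unitA" for n using rv_unitA[OF wf approx_prod[OF A]] .
  have eq: "cA (rv_fml Ms (A n) (Neg \<phi>)) = negB R (cA (rv_fml Ms (A n) \<phi>))" for n
    using neg_eq u[of n] by (simp add: rv_fml_def)
  show "fvalR R \<tau> (Neg \<phi>) \<in> auxB R \<and> conv (distB R) (\<lambda>n. cA (rv_fml Ms (A n) (Neg \<phi>))) (fvalR R \<tau> (Neg \<phi>))"
    using nh_in c(1) neg_conv[OF cA_in[OF u] c] eq by simp
qed

lemma FC_Half: assumes wf: "wf_fml L \<phi>" and fc: "FC \<phi>" shows "FC (Half \<phi>)"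
  unfolding FC_def
proof (intro allI impI)
  fix \<tau> A assume \<tau>: "\<forall>i. \<tau> i \<in> mainN R" and A: "approx \<tau> A"
  have c: "fvalR R \<tau> \<phi> \<in> auxB R" "conv (distB R) (\<lambda>n. cA (rv_fml Ms (A n) \<phi>)) (fvalR R \<tau> \<phi>)"
    using fc \<tau> A unfolding FC_def by auto
  have u: "rv_fml Ms (A n) \<phi> \<in> unitA" for n using rv_unitA[OF wf approx_prod[OF A]] .
  have eq: "cA (rv_fml Ms (A n) (Half \<phi>)) = halfB R (cA (rv_fml Ms (A n) \<phi>))" for n
    using half_eq u[of n] by (simp add: rv_fml_def)
  show "fvalR R \<tau> (Half \<phi>) \<in> auxB R \<and> conv (distB R) (\<lambda>n. cA (rv_fml Ms (A n) (Half \<phi>))) (fvalR R \<tau> (Half \<phi>))"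
    using nh_in c(1) half_conv[OF cA_in[OF u] c] eq by simp
qed

lemma FC_Minus: assumes wf: "wf_fml L \<phi>" "wf_fml L \<psi>" and fc: "FC \<phi>" "FC \<psi>" shows "FC (Minus \<phi> \<psi>)"
  unfolding FC_def
proof (intro allI impI)
  fix \<tau> A assume \<tau>: "\<forall>i. \<tau> i \<in> mainN R" and A: "approx \<tau> A"
  have c: "fvalR R \<tau> \<phi> \<in> auxB R" "conv (distB R) (\<lambda>n. cA (rv_fml Ms (A n) \<phi>)) (fvalR R \<tau> \<phi>)"
    using fc(1) \<tau> A unfolding FC_def by auto
  have d: "fvalR R \<tau> \<psi> \<in> auxB R" "conv (distB R) (\<lambda>n. cA (rv_fml Ms (A n) \<psi>)) (fvalR R \<tau> \<psi>)"
    using fc(2) \<tau> A unfolding FC_def by auto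
  have u: "rv_fml Ms (A n) \<phi> \<in> unitA" "rv_fml Ms (A n) \<psi> \<in> unitA" for n
    using rv_unitA[OF wf(1) approx_prod[OF A]] rv_unitA[OF wf(2) approx_prod[OF A]] by auto
  have eq: "cA (rv_fml Ms (A n) (Minus \<phi> \<psi>)) = minusB R (cA (rv_fml Ms (A n) \<phi>)) (cA (rv_fml Ms (A n) \<psi>))" for n
    using minus_eq u[of n] by (simp add: rv_fml_def)
  show "fvalR R \<tau> (Minus \<phi> \<psi>) \<in> auxB R \<and> conv (distB R) (\<lambda>n. cA (rv_fml Ms (A n) (Minus \<phi> \<psi>))) (fvalR R \<tau> (Minus \<phi> \<psi>))"
    using minus_in c(1) d(1) minus_conv[OF cA_in[OF u(1)] cA_in[OF u(2)] c(1) d(1) c(2) d(2)] eq by simp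
qed

lemma FC_Pred: assumes wfP: "wf_fml L (Pred p ts)" shows "FC (Pred p ts)"
  unfolding FC_def
proof (intro allI impI)
  fix \<tau> A assume \<tau>: "\<forall>i. \<tau> i \<in> mainN R" and A: "approx \<tau> A"
  have wf: "length ts = parity L p" "\<forall>t\<in>set ts. wf_trm L t" using wfP by auto
  have IH: "\<And>t. t \<in> set ts \<Longrightarrow> tvalR R \<tau> t \<in> mainN R \<and> conv (distN R) (\<lambda>n. cM (tvp Ms (A n) t)) (tvalR R \<tau> t)"
    using tv_conv wf \<tau> A by blast
  have xs: "map (tvalR R \<tau>) ts \<in> tuples (mainN R) (parity L p)" using IH wf by (auto simp: tuples_def)
  have ys: "map (\<lambda>t. cM (tvp Ms (A k) t)) ts \<in> tuples (mainN R) (parity L p)" for k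
    using wf cM_in prod_tvp approx_prod[OF A] by (auto simp: tuples_def)
  have eq: "cA (rv_fml Ms (A k) (Pred p ts)) = predN R p (map (\<lambda>t. cM (tvp Ms (A k) t)) ts)" for k
  proof -
    have "map (tvp Ms (A k)) ts \<in> tuples (prodM Ms) (parity L p)"
      using wf prod_tvp approx_prod[OF A] by (auto simp: tuples_def)
    then have "predN R p (map cM (map (tvp Ms (A k)) ts)) = cA (pw_pred Ms p (map (tvp Ms (A k)) ts))"
      using preds by blast
    then show ?thesis by (simp add: rv_Pred o_def)
  qed
  have "conv (distB R) (\<lambda>k. predN R p (map (\<lambda>t. cM (tvp Ms (A k) t)) ts)) (predN R p (map (tvalR R \<tau>) ts))"
  proof (rule cont_conv[OF dN_com dB_com _ xs ys])
    show "cont_tuples (mainN R) (distN R) (parity L p) (distB R) (predN R p)" using preds by blast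
    fix j assume "j < parity L p"
    then have "ts ! j \<in> set ts" using wf by simp
    then show "conv (distN R) (\<lambda>k. map (\<lambda>t. cM (tvp Ms (A k) t)) ts ! j) (map (tvalR R \<tau>) ts ! j)"
      using IH \<open>j < parity L p\<close> wf by simp
  qed
  then show "fvalR R \<tau> (Pred p ts) \<in> auxB R \<and> conv (distB R) (\<lambda>n. cA (rv_fml Ms (A n) (Pred p ts))) (fvalR R \<tau> (Pred p ts))"
    using xs preds eq by simp
qed

lemma FC_Dist: assumes wfD: "wf_fml L (Dist t u)" shows "FC (Dist t u)"
  unfolding FC_def
proof (intro allI impI)
  fix \<tau> A assume \<tau>: "\<forall>i. \<tau> i \<in> mainN R" and A: "approx \<tau> A"
  have wf: "wf_trm L t" "wf_trm L u" using wfD by auto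
  have ct: "tvalR R \<tau> t \<in> mainN R" "conv (distN R) (\<lambda>n. cM (tvp Ms (A n) t)) (tvalR R \<tau> t)"
    using tv_conv[OF wf(1) \<tau> A] by auto
  have cu: "tvalR R \<tau> u \<in> mainN R" "conv (distN R) (\<lambda>n. cM (tvp Ms (A n) u)) (tvalR R \<tau> u)"
    using tv_conv[OF wf(2) \<tau> A] by auto
  have pt: "tvp Ms (A k) t \<in> prodM Ms" "tvp Ms (A k) u \<in> prodM Ms" for k
    using prod_tvp wf approx_prod[OF A] by auto
  have eq: "cA (rv_fml Ms (A k) (Dist t u)) = dsymN R (cM (tvp Ms (A k) t)) (cM (tvp Ms (A k) u))" for k
    using dsym_eq pt[of k] by (simp add: rv_Dist)
  have "conv (distB R) (\<lambda>k. (\<lambda>xs. dsymN R (xs ! 0) (xs ! 1)) [cM (tvp Ms (A k) t), cM (tvp Ms (A k) u)])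
        ((\<lambda>xs. dsymN R (xs ! 0) (xs ! 1)) [tvalR R \<tau> t, tvalR R \<tau> u])"
    by (rule cont_conv[OF dN_com dB_com dsym_cont tup2[OF ct(1) cu(1)] tup2[OF cM_in[OF pt(1)] cM_in[OF pt(2)]] conv2[OF ct(2) cu(2)]])
  then show "fvalR R \<tau> (Dist t u) \<in> auxB R \<and> conv (distB R) (\<lambda>n. cA (rv_fml Ms (A n) (Dist t u))) (fvalR R \<tau> (Dist t u))"
    using dsym_in ct(1) cu(1) eq by simp
qed

end

context assocS begin

lemma FC_Sup: assumes wf: "wf_fml L \<phi>" and fc: "FC \<phi>" shows "FC (Sup x \<phi>)"
  unfolding FC_def
proof (intro allI impI)
  interpret MN: Metric_space "mainN R" "distN R" by (rule MN)
  interpret MB: Metric_space "auxB R" "distB R" by (rule MB)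
  fix \<tau> :: "nat \<Rightarrow> 'n" and A :: "nat \<Rightarrow> nat \<Rightarrow> 'w \<Rightarrow> 'm"
  assume \<tau>: "\<forall>i. \<tau> i \<in> mainN R" and A: "approx \<tau> A"
  have wfS: "wf_fml L (Sup x \<phi>)" using wf by simp
  have An: "\<And>n. \<forall>i. A n i \<in> prodM Ms" using approx_prod[OF A] .
  define Z where "Z n = rv_fml Ms (A n) (Sup x \<phi>)" for n
  have Zu: "\<And>n. Z n \<in> unitA" unfolding Z_def using rv_unitA[OF wfS An] .
  have Zw: "\<And>n w. Z n w = (SUP b\<in>carrier (Ms w). fval (Ms w) ((\<lambda>i. A n i w)(x := b)) \<phi>)"
    by (simp add: Z_def rv_fml_def)
  have fr: "\<And>n w b. b \<in> carrier (Ms w) \<Longrightarrow> fval (Ms w) ((\<lambda>i. A n i w)(x := b)) \<phi> \<in> {0..1}"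
    by (rule fval_range[OF ST[rule_format] wf upd_carr[OF An]])
  have bdd: "\<And>n w. bdd_above ((\<lambda>b. fval (Ms w) ((\<lambda>i. A n i w)(x := b)) \<phi>) ` carrier (Ms w))"
    using fr by (intro bdd_aboveI[of _ 1]) auto
  have upper_pt: "\<And>n b w. b \<in> prodM Ms \<Longrightarrow> rv_fml Ms ((A n)(x := b)) \<phi> w \<le> Z n w"
  proof -
    fix n b w assume b: "b \<in> prodM Ms"
    then have "b w \<in> carrier (Ms w)" by (simp add: prodM_def)
    then show "rv_fml Ms ((A n)(x := b)) \<phi> w \<le> Z n w"
      unfolding rv_upd Zw by (rule cSUP_upper[OF _ bdd])
  qed
  have Cauchy: "\<forall>\<epsilon>>0. \<exists>N. \<forall>n n'. N \<le> n \<longrightarrow> N \<le> n' \<longrightarrow> distB R (cA (Z n)) (cA (Z n')) < \<epsilon>"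
  proof (intro allI impI)
    fix \<epsilon> :: real assume ep: "\<epsilon> > 0"
    obtain \<delta> where d: "\<delta> > 0" "\<forall>A B. (\<forall>i. A i \<in> prodM Ms) \<longrightarrow> (\<forall>i. B i \<in> prodM Ms) \<longrightarrow>
       (\<forall>i. dM E Ms (A i) (B i) < \<delta>) \<longrightarrow> dA E (rv_fml Ms A (Sup x \<phi>)) (rv_fml Ms B (Sup x \<phi>)) < \<epsilon>"
      using rv_unif[OF wfS] ep unfolding UCf_def by blast
    obtain N where N: "\<forall>n\<ge>N. \<forall>i. distN R (cM (A n i)) (\<tau> i) < \<delta>/2"
      using A d(1) unfolding approx_def by (meson half_gt_zero)
    show "\<exists>N. \<forall>n n'. N \<le> n \<longrightarrow> N \<le> n' \<longrightarrow> distB R (cA (Z n)) (cA (Z n')) < \<epsilon>"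
    proof (intro exI[of _ N] allI impI)
      fix n n' assume n: "N \<le> n" and n': "N \<le> n'"
      have "dM E Ms (A n i) (A n' i) < \<delta>" for i
      proof -
        have Ai: "A n i \<in> prodM Ms" and Ci: "A n' i \<in> prodM Ms" using An by auto
        have "distN R (cM (A n i)) (cM (A n' i)) \<le> distN R (cM (A n i)) (\<tau> i) + distN R (\<tau> i) (cM (A n' i))"
          by (rule MN.triangle[OF cM_in[OF Ai] _ cM_in[OF Ci]]) (use \<tau> in simp)
        moreover have "distN R (\<tau> i) (cM (A n' i)) = distN R (cM (A n' i)) (\<tau> i)" by (rule MN.commute)
        moreover have "distN R (cM (A n i)) (\<tau> i) < \<delta>/2" using N n by simp
        moreover have "distN R (cM (A n' i)) (\<tau> i) < \<delta>/2" using N n' by simp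
        moreover have "distN R (cM (A n i)) (cM (A n' i)) = dM E Ms (A n i) (A n' i)" by (rule cM_iso[OF Ai Ci])
        ultimately show ?thesis by linarith
      qed
      then have "dA E (Z n) (Z n') < \<epsilon>" using d(2) An unfolding Z_def by simp
      then show "distB R (cA (Z n)) (cA (Z n')) < \<epsilon>" using cA_iso[OF Zu Zu] by simp
    qed
  qed
  obtain v where v: "v \<in> auxB R" "conv (distB R) (\<lambda>n. cA (Z n)) v"
    using completeB[OF cA_in[OF Zu] Cauchy] by blast
  define S where "S = (\<lambda>b. fvalR R (\<tau>(x := b)) \<phi>) ` mainN R"
  have up: "\<forall>s\<in>S. leB R s v"
  proof
    fix s assume "s \<in> S"
    then obtain \<beta> where \<beta>: "\<beta> \<in> mainN R" "s = fvalR R (\<tau>(x := \<beta>)) \<phi>" unfolding S_def by blast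
    obtain Bb where Bb: "approx (\<lambda>i. \<beta>) Bb" using approx_exists[of "\<lambda>i. \<beta>"] \<beta>(1) by blast
    define A' where "A' n = (A n)(x := Bb n 0)" for n
    have \<tau>': "\<forall>i. (\<tau>(x := \<beta>)) i \<in> mainN R" using \<tau> \<beta>(1) by simp
    have "approx (\<tau>(x := \<beta>)) A'" unfolding approx_def
    proof (intro conjI allI impI)
      show "A' n i \<in> prodM Ms" for n i using An approx_prod[OF Bb] unfolding A'_def by simp
      fix \<epsilon> :: real assume ep: "\<epsilon> > 0"
      obtain N1 where N1: "\<forall>n\<ge>N1. \<forall>i. distN R (cM (A n i)) (\<tau> i) < \<epsilon>" using A ep unfolding approx_def by blast
      obtain N2 where N2: "\<forall>n\<ge>N2. \<forall>i. distN R (cM (Bb n i)) \<beta> < \<epsilon>" using Bb ep unfolding approx_def by blast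
      show "\<exists>N. \<forall>n\<ge>N. \<forall>i. distN R (cM (A' n i)) ((\<tau>(x := \<beta>)) i) < \<epsilon>"
        using N1 N2 unfolding A'_def by (intro exI[of _ "N1 + N2"]) auto
    qed
    then have cs: "s \<in> auxB R" "conv (distB R) (\<lambda>n. cA (rv_fml Ms (A' n) \<phi>)) s"
      using fc \<tau>' \<beta>(2) unfolding FC_def by auto
    have A'p: "\<forall>i. A' n i \<in> prodM Ms" for n using An approx_prod[OF Bb] unfolding A'_def by simp
    show "leB R s v"
    proof (rule leB_closed[OF cA_in[OF rv_unitA[OF wf A'p]] cA_in[OF Zu] cs(1) v(1) cs(2) v(2), of 0])
      fix n
      show "leB R (cA (rv_fml Ms (A' n) \<phi>)) (cA (Z n))"
        by (rule leB_img[OF rv_unitA[OF wf A'p] Zu]) (unfold A'_def, rule upper_pt, use approx_prod[OF Bb] in simp)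
    qed
  qed
  have least: "\<forall>U\<in>auxB R. (\<forall>s\<in>S. leB R s U) \<longrightarrow> leB R v U"
  proof (intro ballI impI)
    fix U assume U: "U \<in> auxB R" and hU: "\<forall>s\<in>S. leB R s U"
    have "\<exists>bb. bb \<in> prodM Ms \<and> (\<forall>w. Z n w \<le> rv_fml Ms ((A n)(x := bb)) \<phi> w + 1 / real (Suc n))" for n
    proof -
      have "\<exists>m. m \<in> carrier (Ms w) \<and> Z n w - 1 / real (Suc n) < fval (Ms w) ((\<lambda>i. A n i w)(x := m)) \<phi>" for w
      proof -
        have ne: "carrier (Ms w) \<noteq> {}" using lstruc_ne[OF ST[rule_format]] .
        have "Z n w - 1 / real (Suc n) < Z n w" by simp
        then show ?thesis unfolding Zw[of n w] using less_cSUP_iff[OF ne bdd] by blast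
      qed
      then obtain bb where bb: "\<And>w. bb w \<in> carrier (Ms w)"
        "\<And>w. Z n w - 1 / real (Suc n) < fval (Ms w) ((\<lambda>i. A n i w)(x := bb w)) \<phi>" by metis
      show ?thesis
      proof (intro exI[of _ bb] conjI allI)
        show "bb \<in> prodM Ms" using bb(1) by (simp add: prodM_def)
        fix w
        have "Z n w - 1 / real (Suc n) < fval (Ms w) ((\<lambda>i. A n i w)(x := bb w)) \<phi>" by (rule bb(2))
        then show "Z n w \<le> rv_fml Ms ((A n)(x := bb)) \<phi> w + 1 / real (Suc n)"
          unfolding rv_upd by linarith
      qed
    qed
    then obtain bbs where bbs: "\<And>n. bbs n \<in> prodM Ms"
      "\<And>n w. Z n w \<le> rv_fml Ms ((A n)(x := bbs n)) \<phi> w + 1 / real (Suc n)" by metis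
    define s where "s n = fvalR R (\<tau>(x := cM (bbs n))) \<phi>" for n
    have \<tau>n: "\<forall>i. (\<tau>(x := cM (bbs n))) i \<in> mainN R" for n using \<tau> cM_in[OF bbs(1)] by simp
    have sin: "s n \<in> auxB R" for n unfolding s_def by (rule FC_in[OF fc \<tau>n])
    have sS: "s n \<in> S" for n unfolding s_def S_def using cM_in[OF bbs(1)] by blast
    have Cp: "\<forall>i. ((A n)(x := bbs n)) i \<in> prodM Ms" for n using An bbs(1) by simp
    have cs: "conv (distB R) s v" unfolding conv_def
    proof (intro allI impI)
      fix \<epsilon> :: real assume ep: "\<epsilon> > 0"
      obtain \<delta> where d: "\<delta> > 0" "\<forall>\<tau> C. (\<forall>i. \<tau> i \<in> mainN R) \<longrightarrow> (\<forall>i. C i \<in> prodM Ms) \<longrightarrow>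
         (\<forall>i. distN R (cM (C i)) (\<tau> i) < \<delta>) \<longrightarrow> distB R (cA (rv_fml Ms C \<phi>)) (fvalR R \<tau> \<phi>) \<le> \<epsilon>/4"
        using unifR[OF wf fc, of "\<epsilon>/4"] ep by auto
      obtain N1 where N1: "\<forall>n\<ge>N1. \<forall>i. distN R (cM (A n i)) (\<tau> i) < \<delta>" using A d(1) unfolding approx_def by blast
      obtain N2 where N2: "1 / real (Suc N2) < \<epsilon>/4" using ep nat_approx_posE[of "\<epsilon>/4"] by auto
      obtain N3 where N3: "\<forall>n\<ge>N3. distB R (cA (Z n)) v < \<epsilon>/4" using v(2) ep unfolding conv_def by (meson zero_less_divide_iff zero_less_numeral)
      show "\<exists>N. \<forall>n\<ge>N. distB R (s n) v < \<epsilon>"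
      proof (intro exI[of _ "N1 + N2 + N3"] allI impI)
        fix n assume n: "N1 + N2 + N3 \<le> n"
        let ?C = "(A n)(x := bbs n)"
        have "distN R (cM (?C i)) ((\<tau>(x := cM (bbs n))) i) < \<delta>" for i
        proof (cases "i = x")
          case True
          then show ?thesis using Metric_space.zero[OF MN] cM_in[OF bbs(1)] d(1) by simp
        next
          case False
          then show ?thesis using N1 n by simp
        qed
        then have d1: "distB R (cA (rv_fml Ms ?C \<phi>)) (s n) \<le> \<epsilon>/4" using d(2) \<tau>n Cp unfolding s_def by blast
        have rC: "rv_fml Ms ?C \<phi> \<in> unitA" using rv_unitA[OF wf Cp] .
        have cu: "(\<lambda>w. 1 / real (Suc n)) \<in> unitA" unfolding unitA_def by simp
        have "E (\<lambda>w. \<bar>Z n w - rv_fml Ms ?C \<phi> w\<bar>) \<le> E (\<lambda>w. 1 / real (Suc n))"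
        proof (rule E_mono[OF abs_unitA[OF Zu rC] cu])
          fix w
          show "\<bar>Z n w - rv_fml Ms ?C \<phi> w\<bar> \<le> 1 / real (Suc n)"
            using upper_pt[of "bbs n" n w, OF bbs(1)] bbs(2)[of n w] by simp
        qed
        also have "\<dots> = 1 / real (Suc n)" by (rule E_const[OF IF])
        also have "\<dots> \<le> 1 / real (Suc N2)" using n by (simp add: frac_le)
        finally have d2: "distB R (cA (Z n)) (cA (rv_fml Ms ?C \<phi>)) < \<epsilon>/4"
          using cA_iso[OF Zu rC] N2 unfolding dA_def by simp
        have d3: "distB R (cA (Z n)) v < \<epsilon>/4" using N3 n by simp
        have "distB R (s n) v \<le> distB R (s n) (cA (rv_fml Ms ?C \<phi>)) + distB R (cA (rv_fml Ms ?C \<phi>)) v"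
          by (rule MB.triangle[OF sin cA_in[OF rC] v(1)])
        moreover have "distB R (cA (rv_fml Ms ?C \<phi>)) v \<le> distB R (cA (rv_fml Ms ?C \<phi>)) (cA (Z n)) + distB R (cA (Z n)) v"
          by (rule MB.triangle[OF cA_in[OF rC] cA_in[OF Zu] v(1)])
        moreover have "distB R (s n) (cA (rv_fml Ms ?C \<phi>)) = distB R (cA (rv_fml Ms ?C \<phi>)) (s n)" by (rule MB.commute)
        moreover have "distB R (cA (rv_fml Ms ?C \<phi>)) (cA (Z n)) = distB R (cA (Z n)) (cA (rv_fml Ms ?C \<phi>))" by (rule MB.commute)
        ultimately show "distB R (s n) v < \<epsilon>" using d1 d2 d3 ep by linarith
      qed
    qed
    have cU: "conv (distB R) (\<lambda>n. U) U" by (rule conv_const) (use U MB.zero in blast)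
    show "leB R v U"
      by (rule leB_closed[OF sin _ v(1) U cs cU, of 0]) (use U hU sS in auto)
  qed
  have "fvalR R \<tau> (Sup x \<phi>) = v"
    unfolding fvalR.simps S_def[symmetric] by (rule SupB_eq[OF v(1) up least])
  then show "fvalR R \<tau> (Sup x \<phi>) \<in> auxB R \<and> conv (distB R) (\<lambda>n. cA (rv_fml Ms (A n) (Sup x \<phi>))) (fvalR R \<tau> (Sup x \<phi>))"
    using v unfolding Z_def by simp
qed

lemma FC_Inf: assumes wf: "wf_fml L \<phi>" and fc: "FC \<phi>" shows "FC (Inf x \<phi>)"
  unfolding FC_def
proof (intro allI impI)
  interpret MN: Metric_space "mainN R" "distN R" by (rule MN)
  interpret MB: Metric_space "auxB R" "distB R" by (rule MB)
  fix \<tau> :: "nat \<Rightarrow> 'n" and A :: "nat \<Rightarrow> nat \<Rightarrow> 'w \<Rightarrow> 'm"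
  assume \<tau>: "\<forall>i. \<tau> i \<in> mainN R" and A: "approx \<tau> A"
  have wfS: "wf_fml L (Inf x \<phi>)" using wf by simp
  have An: "\<And>n. \<forall>i. A n i \<in> prodM Ms" using approx_prod[OF A] .
  define Z where "Z n = rv_fml Ms (A n) (Inf x \<phi>)" for n
  have Zu: "\<And>n. Z n \<in> unitA" unfolding Z_def using rv_unitA[OF wfS An] .
  have Zw: "\<And>n w. Z n w = (INF b\<in>carrier (Ms w). fval (Ms w) ((\<lambda>i. A n i w)(x := b)) \<phi>)"
    by (simp add: Z_def rv_fml_def)
  have fr: "\<And>n w b. b \<in> carrier (Ms w) \<Longrightarrow> fval (Ms w) ((\<lambda>i. A n i w)(x := b)) \<phi> \<in> {0..1}"
    by (rule fval_range[OF ST[rule_format] wf upd_carr[OF An]])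
  have bdd: "\<And>n w. bdd_below ((\<lambda>b. fval (Ms w) ((\<lambda>i. A n i w)(x := b)) \<phi>) ` carrier (Ms w))"
    using fr by (intro bdd_belowI[of _ 0]) auto
  have upper_pt: "\<And>n b w. b \<in> prodM Ms \<Longrightarrow> Z n w \<le> rv_fml Ms ((A n)(x := b)) \<phi> w"
  proof -
    fix n b w assume b: "b \<in> prodM Ms"
    then have "b w \<in> carrier (Ms w)" by (simp add: prodM_def)
    then show "Z n w \<le> rv_fml Ms ((A n)(x := b)) \<phi> w"
      unfolding rv_upd Zw by (rule cINF_lower[OF bdd])
  qed
  have Cauchy: "\<forall>\<epsilon>>0. \<exists>N. \<forall>n n'. N \<le> n \<longrightarrow> N \<le> n' \<longrightarrow> distB R (cA (Z n)) (cA (Z n')) < \<epsilon>"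
  proof (intro allI impI)
    fix \<epsilon> :: real assume ep: "\<epsilon> > 0"
    obtain \<delta> where d: "\<delta> > 0" "\<forall>A B. (\<forall>i. A i \<in> prodM Ms) \<longrightarrow> (\<forall>i. B i \<in> prodM Ms) \<longrightarrow>
       (\<forall>i. dM E Ms (A i) (B i) < \<delta>) \<longrightarrow> dA E (rv_fml Ms A (Inf x \<phi>)) (rv_fml Ms B (Inf x \<phi>)) < \<epsilon>"
      using rv_unif[OF wfS] ep unfolding UCf_def by blast
    obtain N where N: "\<forall>n\<ge>N. \<forall>i. distN R (cM (A n i)) (\<tau> i) < \<delta>/2"
      using A d(1) unfolding approx_def by (meson half_gt_zero)
    show "\<exists>N. \<forall>n n'. N \<le> n \<longrightarrow> N \<le> n' \<longrightarrow> distB R (cA (Z n)) (cA (Z n')) < \<epsilon>"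
    proof (intro exI[of _ N] allI impI)
      fix n n' assume n: "N \<le> n" and n': "N \<le> n'"
      have "dM E Ms (A n i) (A n' i) < \<delta>" for i
      proof -
        have Ai: "A n i \<in> prodM Ms" and Ci: "A n' i \<in> prodM Ms" using An by auto
        have "distN R (cM (A n i)) (cM (A n' i)) \<le> distN R (cM (A n i)) (\<tau> i) + distN R (\<tau> i) (cM (A n' i))"
          by (rule MN.triangle[OF cM_in[OF Ai] _ cM_in[OF Ci]]) (use \<tau> in simp)
        moreover have "distN R (\<tau> i) (cM (A n' i)) = distN R (cM (A n' i)) (\<tau> i)" by (rule MN.commute)
        moreover have "distN R (cM (A n i)) (\<tau> i) < \<delta>/2" using N n by simp
        moreover have "distN R (cM (A n' i)) (\<tau> i) < \<delta>/2" using N n' by simp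
        moreover have "distN R (cM (A n i)) (cM (A n' i)) = dM E Ms (A n i) (A n' i)" by (rule cM_iso[OF Ai Ci])
        ultimately show ?thesis by linarith
      qed
      then have "dA E (Z n) (Z n') < \<epsilon>" using d(2) An unfolding Z_def by simp
      then show "distB R (cA (Z n)) (cA (Z n')) < \<epsilon>" using cA_iso[OF Zu Zu] by simp
    qed
  qed
  obtain v where v: "v \<in> auxB R" "conv (distB R) (\<lambda>n. cA (Z n)) v"
    using completeB[OF cA_in[OF Zu] Cauchy] by blast
  define S where "S = (\<lambda>b. fvalR R (\<tau>(x := b)) \<phi>) ` mainN R"
  have up: "\<forall>s\<in>S. leB R v s"
  proof
    fix s assume "s \<in> S"
    then obtain \<beta> where \<beta>: "\<beta> \<in> mainN R" "s = fvalR R (\<tau>(x := \<beta>)) \<phi>" unfolding S_def by blast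
    obtain Bb where Bb: "approx (\<lambda>i. \<beta>) Bb" using approx_exists[of "\<lambda>i. \<beta>"] \<beta>(1) by blast
    define A' where "A' n = (A n)(x := Bb n 0)" for n
    have \<tau>': "\<forall>i. (\<tau>(x := \<beta>)) i \<in> mainN R" using \<tau> \<beta>(1) by simp
    have "approx (\<tau>(x := \<beta>)) A'" unfolding approx_def
    proof (intro conjI allI impI)
      show "A' n i \<in> prodM Ms" for n i using An approx_prod[OF Bb] unfolding A'_def by simp
      fix \<epsilon> :: real assume ep: "\<epsilon> > 0"
      obtain N1 where N1: "\<forall>n\<ge>N1. \<forall>i. distN R (cM (A n i)) (\<tau> i) < \<epsilon>" using A ep unfolding approx_def by blast
      obtain N2 where N2: "\<forall>n\<ge>N2. \<forall>i. distN R (cM (Bb n i)) \<beta> < \<epsilon>" using Bb ep unfolding approx_def by blast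
      show "\<exists>N. \<forall>n\<ge>N. \<forall>i. distN R (cM (A' n i)) ((\<tau>(x := \<beta>)) i) < \<epsilon>"
        using N1 N2 unfolding A'_def by (intro exI[of _ "N1 + N2"]) auto
    qed
    then have cs: "s \<in> auxB R" "conv (distB R) (\<lambda>n. cA (rv_fml Ms (A' n) \<phi>)) s"
      using fc \<tau>' \<beta>(2) unfolding FC_def by auto
    have A'p: "\<forall>i. A' n i \<in> prodM Ms" for n using An approx_prod[OF Bb] unfolding A'_def by simp
    show "leB R v s"
    proof (rule leB_closed[OF cA_in[OF Zu] cA_in[OF rv_unitA[OF wf A'p]] v(1) cs(1) v(2) cs(2), of 0])
      fix n
      show "leB R (cA (Z n)) (cA (rv_fml Ms (A' n) \<phi>))"
        by (rule leB_img[OF Zu rv_unitA[OF wf A'p]]) (unfold A'_def, rule upper_pt, use approx_prod[OF Bb] in simp)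
    qed
  qed
  have least: "\<forall>U\<in>auxB R. (\<forall>s\<in>S. leB R U s) \<longrightarrow> leB R U v"
  proof (intro ballI impI)
    fix U assume U: "U \<in> auxB R" and hU: "\<forall>s\<in>S. leB R U s"
    have "\<exists>bb. bb \<in> prodM Ms \<and> (\<forall>w. rv_fml Ms ((A n)(x := bb)) \<phi> w \<le> Z n w + 1 / real (Suc n))" for n
    proof -
      have "\<exists>m. m \<in> carrier (Ms w) \<and> fval (Ms w) ((\<lambda>i. A n i w)(x := m)) \<phi> < Z n w + 1 / real (Suc n)" for w
      proof -
        have ne: "carrier (Ms w) \<noteq> {}" using lstruc_ne[OF ST[rule_format]] .
        have "Z n w < Z n w + 1 / real (Suc n)" by simp
        then show ?thesis unfolding Zw[of n w] using cINF_less_iff[OF ne bdd] by blast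
      qed
      then obtain bb where bb: "\<And>w. bb w \<in> carrier (Ms w)"
        "\<And>w. fval (Ms w) ((\<lambda>i. A n i w)(x := bb w)) \<phi> < Z n w + 1 / real (Suc n)" by metis
      show ?thesis
      proof (intro exI[of _ bb] conjI allI)
        show "bb \<in> prodM Ms" using bb(1) by (simp add: prodM_def)
        fix w
        have "fval (Ms w) ((\<lambda>i. A n i w)(x := bb w)) \<phi> < Z n w + 1 / real (Suc n)" by (rule bb(2))
        then show "rv_fml Ms ((A n)(x := bb)) \<phi> w \<le> Z n w + 1 / real (Suc n)"
          unfolding rv_upd by linarith
      qed
    qed
    then obtain bbs where bbs: "\<And>n. bbs n \<in> prodM Ms"
      "\<And>n w. rv_fml Ms ((A n)(x := bbs n)) \<phi> w \<le> Z n w + 1 / real (Suc n)" by metis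
    define s where "s n = fvalR R (\<tau>(x := cM (bbs n))) \<phi>" for n
    have \<tau>n: "\<forall>i. (\<tau>(x := cM (bbs n))) i \<in> mainN R" for n using \<tau> cM_in[OF bbs(1)] by simp
    have sin: "s n \<in> auxB R" for n unfolding s_def by (rule FC_in[OF fc \<tau>n])
    have sS: "s n \<in> S" for n unfolding s_def S_def using cM_in[OF bbs(1)] by blast
    have Cp: "\<forall>i. ((A n)(x := bbs n)) i \<in> prodM Ms" for n using An bbs(1) by simp
    have cs: "conv (distB R) s v" unfolding conv_def
    proof (intro allI impI)
      fix \<epsilon> :: real assume ep: "\<epsilon> > 0"
      obtain \<delta> where d: "\<delta> > 0" "\<forall>\<tau> C. (\<forall>i. \<tau> i \<in> mainN R) \<longrightarrow> (\<forall>i. C i \<in> prodM Ms) \<longrightarrow>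
         (\<forall>i. distN R (cM (C i)) (\<tau> i) < \<delta>) \<longrightarrow> distB R (cA (rv_fml Ms C \<phi>)) (fvalR R \<tau> \<phi>) \<le> \<epsilon>/4"
        using unifR[OF wf fc, of "\<epsilon>/4"] ep by auto
      obtain N1 where N1: "\<forall>n\<ge>N1. \<forall>i. distN R (cM (A n i)) (\<tau> i) < \<delta>" using A d(1) unfolding approx_def by blast
      obtain N2 where N2: "1 / real (Suc N2) < \<epsilon>/4" using ep nat_approx_posE[of "\<epsilon>/4"] by auto
      obtain N3 where N3: "\<forall>n\<ge>N3. distB R (cA (Z n)) v < \<epsilon>/4" using v(2) ep unfolding conv_def by (meson zero_less_divide_iff zero_less_numeral)
      show "\<exists>N. \<forall>n\<ge>N. distB R (s n) v < \<epsilon>"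
      proof (intro exI[of _ "N1 + N2 + N3"] allI impI)
        fix n assume n: "N1 + N2 + N3 \<le> n"
        let ?C = "(A n)(x := bbs n)"
        have "distN R (cM (?C i)) ((\<tau>(x := cM (bbs n))) i) < \<delta>" for i
        proof (cases "i = x")
          case True
          then show ?thesis using Metric_space.zero[OF MN] cM_in[OF bbs(1)] d(1) by simp
        next
          case False
          then show ?thesis using N1 n by simp
        qed
        then have d1: "distB R (cA (rv_fml Ms ?C \<phi>)) (s n) \<le> \<epsilon>/4" using d(2) \<tau>n Cp unfolding s_def by blast
        have rC: "rv_fml Ms ?C \<phi> \<in> unitA" using rv_unitA[OF wf Cp] .
        have cu: "(\<lambda>w. 1 / real (Suc n)) \<in> unitA" unfolding unitA_def by simp
        have "E (\<lambda>w. \<bar>Z n w - rv_fml Ms ?C \<phi> w\<bar>) \<le> E (\<lambda>w. 1 / real (Suc n))"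
        proof (rule E_mono[OF abs_unitA[OF Zu rC] cu])
          fix w
          show "\<bar>Z n w - rv_fml Ms ?C \<phi> w\<bar> \<le> 1 / real (Suc n)"
            using upper_pt[of "bbs n" n w, OF bbs(1)] bbs(2)[of n w] by simp
        qed
        also have "\<dots> = 1 / real (Suc n)" by (rule E_const[OF IF])
        also have "\<dots> \<le> 1 / real (Suc N2)" using n by (simp add: frac_le)
        finally have d2: "distB R (cA (Z n)) (cA (rv_fml Ms ?C \<phi>)) < \<epsilon>/4"
          using cA_iso[OF Zu rC] N2 unfolding dA_def by simp
        have d3: "distB R (cA (Z n)) v < \<epsilon>/4" using N3 n by simp
        have "distB R (s n) v \<le> distB R (s n) (cA (rv_fml Ms ?C \<phi>)) + distB R (cA (rv_fml Ms ?C \<phi>)) v"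
          by (rule MB.triangle[OF sin cA_in[OF rC] v(1)])
        moreover have "distB R (cA (rv_fml Ms ?C \<phi>)) v \<le> distB R (cA (rv_fml Ms ?C \<phi>)) (cA (Z n)) + distB R (cA (Z n)) v"
          by (rule MB.triangle[OF cA_in[OF rC] cA_in[OF Zu] v(1)])
        moreover have "distB R (s n) (cA (rv_fml Ms ?C \<phi>)) = distB R (cA (rv_fml Ms ?C \<phi>)) (s n)" by (rule MB.commute)
        moreover have "distB R (cA (rv_fml Ms ?C \<phi>)) (cA (Z n)) = distB R (cA (Z n)) (cA (rv_fml Ms ?C \<phi>))" by (rule MB.commute)
        ultimately show "distB R (s n) v < \<epsilon>" using d1 d2 d3 ep by linarith
      qed
    qed
    have cU: "conv (distB R) (\<lambda>n. U) U" by (rule conv_const) (use U MB.zero in blast)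
    show "leB R U v"
      by (rule leB_closed[OF _ sin U v(1) cU cs, of 0]) (use U hU sS in auto)
  qed
  have "fvalR R \<tau> (Inf x \<phi>) = v"
    unfolding fvalR.simps S_def[symmetric] by (rule InfB_eq[OF v(1) up least])
  then show "fvalR R \<tau> (Inf x \<phi>) \<in> auxB R \<and> conv (distB R) (\<lambda>n. cA (rv_fml Ms (A n) (Inf x \<phi>))) (fvalR R \<tau> (Inf x \<phi>))"
    using v unfolding Z_def by simp
qed

end

context assocS begin
theorem FC_all: "wf_fml L \<phi> \<Longrightarrow> FC \<phi>"
proof (induction \<phi>)
  case (Pred p ts) then show ?case using FC_Pred by blast
next
  case (Dist t u) then show ?case using FC_Dist by blast
next
  case Zero then show ?case using FC_Zero by blast
next
  case (Neg \<phi>) then show ?case using FC_Neg by simp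
next
  case (Half \<phi>) then show ?case using FC_Half by simp
next
  case (Minus \<phi> \<psi>) then show ?case using FC_Minus by simp
next
  case (Sup x \<phi>) then show ?case using FC_Sup by simp
next
  case (Inf x \<phi>) then show ?case using FC_Inf by simp
qed

lemma main_eq: assumes "wf_fml L \<phi>" "\<forall>i. as i \<in> prodM Ms"
  shows "cA (rv_fml Ms as \<phi>) = fvalR R (\<lambda>i. cM (as i)) \<phi>"
proof -
  have \<tau>: "\<forall>i. cM (as i) \<in> mainN R" using cM_in assms(2) by blast
  have "fvalR R (\<lambda>i. cM (as i)) \<phi> \<in> auxB R \<and> conv (distB R) (\<lambda>n. cA (rv_fml Ms as \<phi>)) (fvalR R (\<lambda>i. cM (as i)) \<phi>)"
    using FC_all[OF assms(1), unfolded FC_def, rule_format, OF \<tau>[rule_format] approx_const[OF assms(2)]] by simp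
  then show ?thesis
    using Metric_space.conv_const_eq[OF MB cA_in[OF rv_unitA[OF assms]]] by blast
qed
end

lemma full_prod: fixes Ms :: "'w \<Rightarrow> ('m, 'f, 'p) lstruc" shows "full (prodM Ms) unitA"
  unfolding full_def
proof (intro ballI)
  fix a b :: "'w \<Rightarrow> 'm" and X :: "'w \<Rightarrow> real" assume a: "a \<in> prodM Ms" and b: "b \<in> prodM Ms" and "X \<in> unitA"
  show "\<exists>c\<in>prodM Ms. \<forall>w. (X w = 1 \<longrightarrow> c w = a w) \<and> (X w = 0 \<longrightarrow> c w = b w)"
    using a b by (intro bexI[of _ "\<lambda>w. if X w = 1 then a w else b w"]) (auto simp: prodM_def)
qed

theorem theorem3p19:
  fixes L :: "('f, 'p) csig"
    and Ms :: "'w \<Rightarrow> ('m, 'f, 'p) lstruc"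
    and E :: "('w \<Rightarrow> real) \<Rightarrow> real"
    and R :: "('n, 'b, 'f, 'p) rstruc"
    and cM :: "('w \<Rightarrow> 'm) \<Rightarrow> 'n"
    and cA :: "('w \<Rightarrow> real) \<Rightarrow> 'b"
  assumes "wf_csig L"
    and "\<forall>w. is_lstruc L (Ms w)"
    and "integration_functional E"
    and "is_assoc_struct L Ms E R cM cA"
  shows "full (prodM Ms) unitA \<and>
         (\<forall>\<phi> as. wf_fml L \<phi> \<longrightarrow> (\<forall>i. as i \<in> prodM Ms) \<longrightarrow>
            cA (rv_fml Ms as \<phi>) = fvalR R (\<lambda>i. cM (as i)) \<phi>)"
proof -
  interpret assocS L Ms E R cM cA
    by (unfold_locales) (use assms in auto)
  show ?thesis using full_prod main_eq by blast
qed

end
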